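(* Let $\Bbbk$ be a field of characteristic $0$, let $\Sigma$ be a compact connected oriented surface of genus $g\ge0$ with $r+1\ge1$ boundary components, and $*\in\partial\Sigma$. Present $A=\Bbbk\pi_1(\Sigma,* )$ as the $\Bbbk$-algebra generated by $\alpha_i^{\pm1},\beta_i^{\pm1},\gamma_k^{\pm1},\Phi^{\pm1}$ ($1\le i\le g$, $1\le k\le r$) subject to $\prod^{\rightarrow}_{1\le i\le g}[\alpha_i,\beta_i]\prod^{\rightarrow}_{1\le k\le r}\gamma_k=\Phi$, where $[\alpha,\beta]=\alpha\beta\alpha^{-1}\beta^{-1}$ and products are ordered left to right by increasing index. Then $A$ has a double quasi-Poisson bracket (over $B=\Bbbk$) given by: for $1\le i\le g$, $\{\!\{\alpha_i,\alpha_i\}\!\}=\frac12(\alpha_i^2\otimes1-1\otimes\alpha_i^2)$, $\{\!\{\beta_i,\beta_i\}\!\}=-\frac12(\beta_i^2\otimes1-1\otimes\beta_i^2)$, $\{\!\{\alpha_i,\beta_i\}\!\}=\frac12(\beta_i\alpha_i\otimes1+1\otimes\alpha_i\beta_i-\alpha_i\otimes\beta_i+\beta_i\otimes\alpha_i)$; for $\phi_i\in\{\alpha_i,\beta_i\}$, $\phi_j\in\{\alpha_j,\beta_j\}$ with $1\le i<j\le g$: $\{\!\{\phi_i,\phi_j\}\!\}=\frac12(\phi_j\phi_i\otimes1+1\otimes\phi_i\phi_j-\phi_i\otimes\phi_j-\phi_j\otimes\phi_i)$; for $\phi_i\in\{\alpha_i,\beta_i\}$ and $1\le k\le r$: $\{\!\{\phi_i,\gamma_k\}\!\}=\frac12(\gamma_k\phi_i\otimes1+1\otimes\phi_i\gamma_k-\phi_i\otimes\gamma_k-\gamma_k\otimes\phi_i)$;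 for $1\le k\le r$ and $k<l\le r$: $\{\!\{\gamma_k,\gamma_k\}\!\}=\frac12(\gamma_k^2\otimes1-1\otimes\gamma_k^2)$, $\{\!\{\gamma_k,\gamma_l\}\!\}=\frac12(\gamma_l\gamma_k\otimes1+1\otimes\gamma_k\gamma_l-\gamma_k\otimes\gamma_l-\gamma_l\otimes\gamma_k)$. Furthermore, for any $a\in\{\alpha_i,\beta_i,\gamma_k\}$, $\{\!\{\Phi,a\}\!\}=\frac12(a\otimes\Phi-1\otimes\Phi a+a\Phi\otimes1-\Phi\otimes a)$. In particular $\Phi$ is a multiplicative moment map and $A$ is quasi-Hamiltonian.
   Context: $\otimes=\otimes_\Bbbk$; Sweedler notation $d=d'\otimes d''$; outer bimodule structure $x(d'\otimes d'')y=xd'\otimes d''y$. A double bracket on $A$ (over $\Bbbk$) is a $\Bbbk$-bilinear map $A\times A\to A\otimes A$ with $\{\!\{a,b\}\!\}=-\{\!\{b,a\}\!\}''\otimes\{\!\{b,a\}\!\}'$ and $\{\!\{a,bc\}\!\}=\{\!\{a,b\}\!\}c+b\{\!\{a,c\}\!\}$; it is determined by its values on generators. Triple bracket: $\{\!\{a,b,c\}\!\}=\{\!\{a,\{\!\{b,c\}\!\}'\}\!\}\otimes\{\!\{b,c\}\!\}''+\tau\{\!\{b,\{\!\{c,a\}\!\}'\}\!\}\otimes\{\!\{c,a\}\!\}''+\tau^2\{\!\{c,\{\!\{a,b\}\!\}'\}\!\}\otimes\{\!\{a,b\}\!\}''$, $\tau(x_1\otimes x_2\otimes x_3)=x_3\otimes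 x_1\otimes x_2$. With $B=\Bbbk$ (single idempotent $1$), the bracket is quasi-Poisson if $\{\!\{a,b,c\}\!\}=\frac14(ca\otimes b\otimes1-ca\otimes1\otimes b-c\otimes ab\otimes1+c\otimes a\otimes b-a\otimes b\otimes c+a\otimes1\otimes bc+1\otimes ab\otimes c-1\otimes a\otimes bc)$ for all $a,b,c$. A multiplicative moment map is an invertible $\Phi$ with $\{\!\{\Phi,a\}\!\}=\frac12(a\otimes\Phi-1\otimes\Phi a+a\Phi\otimes1-\Phi\otimes a)$ for all $a\in A$; $A$ is then quasi-Hamiltonian. *)

theory Defs
  imports Main "HOL-Library.Poly_Mapping"
begin

datatype gen = Al nat | Be nat | Ga nat

text \<open>A letter is a generator with an exponent: True = +1, False = -1.
  Group elements are reduced words.\<close>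
type_synonym gword = "(gen \<times> bool) list"

definition reduced :: "gword \<Rightarrow> bool" where
  "reduced w \<longleftrightarrow> (\<forall>i. Suc i < length w \<longrightarrow>
      \<not> (fst (w ! i) = fst (w ! Suc i) \<and> snd (w ! i) \<noteq> snd (w ! Suc i)))"

fun push :: "gen \<times> bool \<Rightarrow> gword \<Rightarrow> gword" where
  "push l [] = [l]"
| "push l (m # s) = (if fst l = fst m \<and> snd l \<noteq> snd m then s else l # m # s)"

definition reduce :: "gword \<Rightarrow> gword" where
  "reduce w = rev (foldl (\<lambda>s l. push l s) [] w)"

definition gmul :: "gword \<Rightarrow> gword \<Rightarrow> gword" where
  "gmul u v = reduce (u @ v)"

text \<open>The generators of the fundamental group of the surface of genus g with r+1
  boundary components (free on 2g+r generators).\<close>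
definition gens :: "nat \<Rightarrow> nat \<Rightarrow> gen set" where
  "gens g r = {Al i | i. 1 \<le> i \<and> i \<le> g} \<union> {Be i | i. 1 \<le> i \<and> i \<le> g}
              \<union> {Ga k | k. 1 \<le> k \<and> k \<le> r}"

text \<open>Elements of the group algebra are finitely supported functions on reduced words;
  A \<otimes> A and A \<otimes> A \<otimes> A are identified with the group algebras of F\<times>F and F\<times>F\<times>F.\<close>

definition algA :: "nat \<Rightarrow> nat \<Rightarrow> (gword \<Rightarrow>\<^sub>0 'k::zero) set" where
  "algA g r = {x. \<forall>w \<in> Poly_Mapping.keys x. reduced w \<and> fst ` set w \<subseteq> gens g r}"

definition smult :: "'k::semiring_0 \<Rightarrow> ('a \<Rightarrow>\<^sub>0 'k) \<Rightarrow> ('a \<Rightarrow>\<^sub>0 'k)" where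
  "smult c x = (\<Sum>u\<in>Poly_Mapping.keys x. Poly_Mapping.single u (c * Poly_Mapping.lookup x u))"

definition amul :: "(gword \<Rightarrow>\<^sub>0 'k::semiring_0) \<Rightarrow> (gword \<Rightarrow>\<^sub>0 'k) \<Rightarrow> (gword \<Rightarrow>\<^sub>0 'k)" where
  "amul x y = (\<Sum>u\<in>Poly_Mapping.keys x. \<Sum>v\<in>Poly_Mapping.keys y.
       Poly_Mapping.single (gmul u v) (Poly_Mapping.lookup x u * Poly_Mapping.lookup y v))"

definition gel :: "gword \<Rightarrow> (gword \<Rightarrow>\<^sub>0 'k::{zero,one})" where
  "gel w = Poly_Mapping.single w 1"

definition aone :: "gword \<Rightarrow>\<^sub>0 'k::{zero,one}" where
  "aone = gel []"

definition tens :: "(gword \<Rightarrow>\<^sub>0 'k::semiring_0) \<Rightarrow> (gword \<Rightarrow>\<^sub>0 'k) \<Rightarrow> (gword \<times> gword \<Rightarrow>\<^sub>0 'k)" where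
  "tens x y = (\<Sum>u\<in>Poly_Mapping.keys x. \<Sum>v\<in>Poly_Mapping.keys y. Poly_Mapping.single (u, v) (Poly_Mapping.lookup x u * Poly_Mapping.lookup y v))"

definition tens3 :: "(gword \<times> gword \<Rightarrow>\<^sub>0 'k::semiring_0) \<Rightarrow> (gword \<Rightarrow>\<^sub>0 'k)
     \<Rightarrow> (gword \<times> gword \<times> gword \<Rightarrow>\<^sub>0 'k)" where
  "tens3 d z = (\<Sum>(p, q)\<in>Poly_Mapping.keys d. \<Sum>w\<in>Poly_Mapping.keys z.
       Poly_Mapping.single (p, q, w) (Poly_Mapping.lookup d (p, q) * Poly_Mapping.lookup z w))"

definition t3 :: "(gword \<Rightarrow>\<^sub>0 'k::semiring_0) \<Rightarrow> (gword \<Rightarrow>\<^sub>0 'k) \<Rightarrow> (gword \<Rightarrow>\<^sub>0 'k)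
     \<Rightarrow> (gword \<times> gword \<times> gword \<Rightarrow>\<^sub>0 'k)" where
  "t3 x y z = tens3 (tens x y) z"

definition lmul :: "(gword \<Rightarrow>\<^sub>0 'k::semiring_0) \<Rightarrow> (gword \<times> gword \<Rightarrow>\<^sub>0 'k) \<Rightarrow> (gword \<times> gword \<Rightarrow>\<^sub>0 'k)" where
  "lmul x d = (\<Sum>u\<in>Poly_Mapping.keys x. \<Sum>(p, q)\<in>Poly_Mapping.keys d.
       Poly_Mapping.single (gmul u p, q) (Poly_Mapping.lookup x u * Poly_Mapping.lookup d (p, q)))"

definition rmul :: "(gword \<times> gword \<Rightarrow>\<^sub>0 'k::semiring_0) \<Rightarrow> (gword \<Rightarrow>\<^sub>0 'k) \<Rightarrow> (gword \<times> gword \<Rightarrow>\<^sub>0 'k)" where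
  "rmul d y = (\<Sum>(p, q)\<in>Poly_Mapping.keys d. \<Sum>v\<in>Poly_Mapping.keys y.
       Poly_Mapping.single (p, gmul q v) (Poly_Mapping.lookup d (p, q) * Poly_Mapping.lookup y v))"

definition swap2 :: "(gword \<times> gword \<Rightarrow>\<^sub>0 'k::semiring_0) \<Rightarrow> (gword \<times> gword \<Rightarrow>\<^sub>0 'k)" where
  "swap2 d = (\<Sum>(p, q)\<in>Poly_Mapping.keys d. Poly_Mapping.single (q, p) (Poly_Mapping.lookup d (p, q)))"

definition tau :: "(gword \<times> gword \<times> gword \<Rightarrow>\<^sub>0 'k::semiring_0) \<Rightarrow> (gword \<times> gword \<times> gword \<Rightarrow>\<^sub>0 'k)" where
  "tau d = (\<Sum>(p, q, s)\<in>Poly_Mapping.keys d. Poly_Mapping.single (s, p, q) (Poly_Mapping.lookup d (p, q, s)))"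

type_synonym 'k dbracket = "(gword \<Rightarrow>\<^sub>0 'k) \<Rightarrow> (gword \<Rightarrow>\<^sub>0 'k) \<Rightarrow> (gword \<times> gword \<Rightarrow>\<^sub>0 'k)"

definition double_bracket_on :: "(gword \<Rightarrow>\<^sub>0 'k::field) set \<Rightarrow> 'k dbracket \<Rightarrow> bool" where
  "double_bracket_on A B \<longleftrightarrow>
     (\<forall>x\<in>A. \<forall>y\<in>A. \<forall>z\<in>A. B (x + y) z = B x z + B y z) \<and>
     (\<forall>c. \<forall>x\<in>A. \<forall>y\<in>A. B (smult c x) y = smult c (B x y)) \<and>
     (\<forall>a\<in>A. \<forall>b\<in>A. B a b = - swap2 (B b a)) \<and>
     (\<forall>a\<in>A. \<forall>b\<in>A. \<forall>c\<in>A. B a (amul b c) = rmul (B a b) c + lmul b (B a c))"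

definition bracket_left :: "'k::semiring_1 dbracket \<Rightarrow> (gword \<Rightarrow>\<^sub>0 'k) \<Rightarrow> (gword \<times> gword \<Rightarrow>\<^sub>0 'k)
     \<Rightarrow> (gword \<times> gword \<times> gword \<Rightarrow>\<^sub>0 'k)" where
  "bracket_left B a d = (\<Sum>(p, q)\<in>Poly_Mapping.keys d. smult (Poly_Mapping.lookup d (p, q)) (tens3 (B a (gel p)) (gel q)))"

definition triple_bracket :: "'k::semiring_1 dbracket \<Rightarrow> (gword \<Rightarrow>\<^sub>0 'k) \<Rightarrow> (gword \<Rightarrow>\<^sub>0 'k)
     \<Rightarrow> (gword \<Rightarrow>\<^sub>0 'k) \<Rightarrow> (gword \<times> gword \<times> gword \<Rightarrow>\<^sub>0 'k)" where
  "triple_bracket B a b c =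
     bracket_left B a (B b c) + tau (bracket_left B b (B c a)) + tau (tau (bracket_left B c (B a b)))"

definition quasi_poisson_on :: "(gword \<Rightarrow>\<^sub>0 'k::field) set \<Rightarrow> 'k dbracket \<Rightarrow> bool" where
  "quasi_poisson_on A B \<longleftrightarrow> (\<forall>a\<in>A. \<forall>b\<in>A. \<forall>c\<in>A.
     triple_bracket B a b c = smult (1/4)
       (t3 (amul c a) b aone - t3 (amul c a) aone b - t3 c (amul a b) aone + t3 c a b
        - t3 a b c + t3 a aone (amul b c) + t3 aone (amul a b) c - t3 aone a (amul b c)))"

definition mm_rhs :: "(gword \<Rightarrow>\<^sub>0 'k::field) \<Rightarrow> (gword \<Rightarrow>\<^sub>0 'k) \<Rightarrow> (gword \<times> gword \<Rightarrow>\<^sub>0 'k)" where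
  "mm_rhs P a = smult (1/2) (tens a P - tens aone (amul P a) + tens (amul a P) aone - tens P a)"

definition mult_moment_map_on :: "(gword \<Rightarrow>\<^sub>0 'k::field) set \<Rightarrow> 'k dbracket \<Rightarrow> (gword \<Rightarrow>\<^sub>0 'k) \<Rightarrow> bool" where
  "mult_moment_map_on A B P \<longleftrightarrow> P \<in> A \<and>
     (\<exists>Q\<in>A. amul P Q = aone \<and> amul Q P = aone) \<and>
     (\<forall>a\<in>A. B P a = mm_rhs P a)"

definition alpha :: "nat \<Rightarrow> (gword \<Rightarrow>\<^sub>0 'k::{zero,one})" where "alpha i = gel [(Al i, True)]"
definition beta  :: "nat \<Rightarrow> (gword \<Rightarrow>\<^sub>0 'k::{zero,one})" where "beta i = gel [(Be i, True)]"
definition gamma :: "nat \<Rightarrow> (gword \<Rightarrow>\<^sub>0 'k::{zero,one})" where "gamma k = gel [(Ga k, True)]"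

definition phi_word :: "nat \<Rightarrow> nat \<Rightarrow> gword" where
  "phi_word g r = reduce (concat (map (\<lambda>i. [(Al i, True), (Be i, True), (Al i, False), (Be i, False)]) [1..<Suc g])
                          @ map (\<lambda>k. (Ga k, True)) [1..<Suc r])"

definition Phi :: "nat \<Rightarrow> nat \<Rightarrow> (gword \<Rightarrow>\<^sub>0 'k::{zero,one})" where
  "Phi g r = gel (phi_word g r)"

definition cross_val :: "(gword \<Rightarrow>\<^sub>0 'k::field) \<Rightarrow> (gword \<Rightarrow>\<^sub>0 'k) \<Rightarrow> (gword \<times> gword \<Rightarrow>\<^sub>0 'k)" where
  "cross_val x y = smult (1/2) (tens (amul y x) aone + tens aone (amul x y) - tens x y - tens y x)"

definition self_val :: "(gword \<Rightarrow>\<^sub>0 'k::field) \<Rightarrow> (gword \<times> gword \<Rightarrow>\<^sub>0 'k)" where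
  "self_val x = smult (1/2) (tens (amul x x) aone - tens aone (amul x x))"

end

theory Submission
  imports Defs
begin

lemma lookup_smult [simp]: "Poly_Mapping.lookup (smult c x) k = c * Poly_Mapping.lookup x k"
proof -
  have "Poly_Mapping.lookup (smult c x) k =
        (\<Sum>u\<in>Poly_Mapping.keys x. (if u = k then c * Poly_Mapping.lookup x u else 0))"
    unfolding smult_def lookup_sum by (simp add: lookup_single when_def)
  also have "\<dots> = c * Poly_Mapping.lookup x k"
    by (cases "k \<in> Poly_Mapping.keys x") (simp_all add: sum.delta in_keys_iff)
  finally show ?thesis .
qed

lemma smult_add_right: "smult (c::'k::field) (x + y) = smult c x + smult c y"
  by (rule poly_mapping_eqI) (simp add: lookup_add algebra_simps)
lemma smult_add_left: "smult ((c::'k::field) + d) x = smult c x + smult d x"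
  by (rule poly_mapping_eqI) (simp add: lookup_add algebra_simps)
lemma smult_smult [simp]: "smult (c::'k::field) (smult d x) = smult (c * d) x"
  by (rule poly_mapping_eqI) (simp add: algebra_simps)
lemma smult_one [simp]: "smult (1::'k::field) x = x"
  by (rule poly_mapping_eqI) simp
lemma smult_zero_left [simp]: "smult (0::'k::field) x = 0"
  by (rule poly_mapping_eqI) simp
lemma smult_zero_right [simp]: "smult (c::'k::field) 0 = 0"
  by (rule poly_mapping_eqI) simp
lemma smult_uminus_right: "smult (c::'k::field) (- x) = - smult c x"
  by (rule poly_mapping_eqI) simp
lemma smult_uminus_left: "smult (- (c::'k::field)) x = - smult c x"
  by (rule poly_mapping_eqI) simp
lemma smult_diff_right: "smult (c::'k::field) (x - y) = smult c x - smult c y"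
  by (rule poly_mapping_eqI) (simp add: lookup_minus algebra_simps)
lemma smult_diff_left: "smult ((c::'k::field) - d) x = smult c x - smult d x"
  by (rule poly_mapping_eqI) (simp add: lookup_minus algebra_simps)
lemma smult_single [simp]: "smult (c::'k::field) (Poly_Mapping.single k a) = Poly_Mapping.single k (c * a)"
  by (rule poly_mapping_eqI) (simp add: lookup_single when_def)
lemma smult_minus_one: "smult (-1::'k::field) x = - x"
  by (rule poly_mapping_eqI) simp
lemma smult_sum: "smult (c::'k::field) (sum f A) = (\<Sum>a\<in>A. smult c (f a))"
  by (induct A rule: infinite_finite_induct) (simp_all add: smult_add_right)
lemma keys_smult: "Poly_Mapping.keys (smult (c::'k::field) x) \<subseteq> Poly_Mapping.keys x"
  by (auto simp: in_keys_iff)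

section \<open>Linear extension\<close>

definition lin :: "('a \<Rightarrow> ('b \<Rightarrow>\<^sub>0 'k::field)) \<Rightarrow> ('a \<Rightarrow>\<^sub>0 'k) \<Rightarrow> ('b \<Rightarrow>\<^sub>0 'k)" where
  "lin F x = (\<Sum>u\<in>Poly_Mapping.keys x. smult (Poly_Mapping.lookup x u) (F u))"

lemma lin_superset:
  assumes "finite S" "Poly_Mapping.keys x \<subseteq> S"
  shows "lin F x = (\<Sum>u\<in>S. smult (Poly_Mapping.lookup x u) (F u))"
  unfolding lin_def
  by (rule sum.mono_neutral_left) (use assms in \<open>auto simp: in_keys_iff\<close>)

lemma lin_add: "lin F (x + y) = lin F x + lin F y"
proof -
  let ?S = "Poly_Mapping.keys x \<union> Poly_Mapping.keys y"
  have "Poly_Mapping.keys (x + y) \<subseteq> ?S" by (rule keys_add)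
  then show ?thesis
    by (simp add: lin_superset[of ?S] lookup_add smult_add_left sum.distrib)
qed

lemma lin_zero [simp]: "lin F 0 = 0"
  by (simp add: lin_def)

lemma lin_single [simp]: "lin F (Poly_Mapping.single u c) = smult c (F u)"
  by (cases "c = 0") (simp_all add: lin_def)

lemma lin_smult: "lin F (smult c x) = smult c (lin F x)"
proof -
  have "lin F (smult c x) = (\<Sum>u\<in>Poly_Mapping.keys x. smult (Poly_Mapping.lookup (smult c x) u) (F u))"
    by (rule lin_superset) (simp_all add: keys_smult)
  then show ?thesis by (simp add: lin_def smult_sum)
qed

lemma lin_uminus: "lin F (- x) = - lin F x"
  using lin_smult[of F "-1" x] by (simp add: smult_minus_one)

lemma lin_diff: "lin F (x - y) = lin F x - lin F y"
  using lin_add[of F x "- y"] by (simp add: lin_uminus)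

lemma lin_cong: "(\<And>u. u \<in> Poly_Mapping.keys x \<Longrightarrow> F u = G u) \<Longrightarrow> lin F x = lin G x"
  by (simp add: lin_def)

lemma lin_fadd: "lin (\<lambda>u. F u + G u) x = lin F x + lin G x"
  by (simp add: lin_def smult_add_right sum.distrib)

lemma lin_fsmult: "lin (\<lambda>u. smult c (F u)) x = smult c (lin F x)"
  by (simp add: lin_def smult_sum mult.commute)

lemma lin_fuminus: "lin (\<lambda>u. - F u) x = - lin F x"
  by (simp add: lin_def smult_uminus_right sum_negf)

lemma lin_fdiff: "lin (\<lambda>u. F u - G u) x = lin F x - lin G x"
  using lin_fadd[of F "\<lambda>u. - G u" x] by (simp add: lin_fuminus)

lemma lin_fzero [simp]: "lin (\<lambda>u. 0) x = 0"
  by (simp add: lin_def)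

lemma sum_single_lookup: "(\<Sum>u\<in>Poly_Mapping.keys x. Poly_Mapping.single u (Poly_Mapping.lookup x u)) = x"
  by (rule poly_mapping_eqI)
     (simp add: lookup_sum lookup_single when_def sum.delta in_keys_iff)

lemma lin_id: "lin (\<lambda>u. Poly_Mapping.single u 1) x = x"
  by (simp add: lin_def sum_single_lookup)

definition islin :: "(('a \<Rightarrow>\<^sub>0 'k::field) \<Rightarrow> ('b \<Rightarrow>\<^sub>0 'k)) \<Rightarrow> bool" where
  "islin H \<longleftrightarrow> (\<forall>x y. H (x + y) = H x + H y) \<and> (\<forall>c x. H (smult c x) = smult c (H x))"

lemma islin_add: "islin H \<Longrightarrow> H (x + y) = H x + H y"
  by (simp add: islin_def)
lemma islin_smult: "islin H \<Longrightarrow> H (smult c x) = smult c (H x)"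
  by (simp add: islin_def)
lemma islin_zero: "islin H \<Longrightarrow> H 0 = 0"
  using islin_smult[of H 0 0] by simp
lemma islin_uminus: "islin H \<Longrightarrow> H (- x) = - H x"
  using islin_smult[of H "-1" x] by (simp add: smult_minus_one)
lemma islin_diff: "islin H \<Longrightarrow> H (x - y) = H x - H y"
  using islin_add[of H x "-y"] islin_uminus[of H y] by simp
lemma islin_sum: "islin H \<Longrightarrow> H (sum f A) = (\<Sum>a\<in>A. H (f a))"
  by (induct A rule: infinite_finite_induct) (simp_all add: islin_zero islin_add)

lemma islin_lin_comm: "islin H \<Longrightarrow> H (lin F x) = lin (\<lambda>u. H (F u)) x"
  by (simp add: lin_def islin_sum islin_smult)

lemma islin_lin [simp, intro]: "islin (lin F)"
  by (simp add: islin_def lin_add lin_smult)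
lemma islin_comp [intro]: "islin H \<Longrightarrow> islin G \<Longrightarrow> islin (\<lambda>x. H (G x))"
  by (simp add: islin_def)
lemma islin_fadd [intro]: "islin H \<Longrightarrow> islin G \<Longrightarrow> islin (\<lambda>x. H x + G x)"
  by (simp add: islin_def smult_add_right algebra_simps)
lemma islin_fdiff [intro]: "islin H \<Longrightarrow> islin G \<Longrightarrow> islin (\<lambda>x. H x - G x)"
  by (simp add: islin_def smult_diff_right algebra_simps)
lemma islin_fuminus [intro]: "islin H \<Longrightarrow> islin (\<lambda>x. - H x)"
  by (simp add: islin_def smult_uminus_right)
lemma islin_fsmult [intro]: "islin H \<Longrightarrow> islin (\<lambda>x. smult c (H x))"
  by (simp add: islin_def smult_add_right mult.commute)
lemma islin_id [intro]: "islin (\<lambda>x. x)"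
  by (simp add: islin_def)
lemma islin_smult_const [intro]: "islin (smult c)"
  by (simp add: islin_def smult_add_right mult.commute)

lemma lin_lin: "lin G (lin F x) = lin (\<lambda>u. lin G (F u)) x"
  by (rule islin_lin_comm) simp

lemma lin_swap: "lin (\<lambda>u. lin (\<lambda>v. G u v) y) x = lin (\<lambda>v. lin (\<lambda>u. G u v) x) y"
proof -
  have "lin (\<lambda>u. lin (\<lambda>v. G u v) y) x =
    (\<Sum>u\<in>Poly_Mapping.keys x. \<Sum>v\<in>Poly_Mapping.keys y.
        smult (Poly_Mapping.lookup x u * Poly_Mapping.lookup y v) (G u v))"
    by (simp add: lin_def smult_sum)
  also have "\<dots> = (\<Sum>v\<in>Poly_Mapping.keys y. \<Sum>u\<in>Poly_Mapping.keys x.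
        smult (Poly_Mapping.lookup y v * Poly_Mapping.lookup x u) (G u v))"
    by (subst sum.swap) (simp add: mult.commute)
  also have "\<dots> = lin (\<lambda>v. lin (\<lambda>u. G u v) x) y"
    by (simp add: lin_def smult_sum)
  finally show ?thesis .
qed

lemma keys_lin: "Poly_Mapping.keys (lin F x) \<subseteq> (\<Union>u\<in>Poly_Mapping.keys x. Poly_Mapping.keys (F u))"
  unfolding lin_def using keys_sum keys_smult by fastforce

lemma lin_induct_eq:
  assumes "islin H" "islin G" "\<And>u. H (Poly_Mapping.single u 1) = G (Poly_Mapping.single u 1)"
  shows "H x = G x"
proof -
  have "H x = H (lin (\<lambda>u. Poly_Mapping.single u 1) x)" by (simp add: lin_id)
  also have "\<dots> = G (lin (\<lambda>u. Poly_Mapping.single u 1) x)"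
    using assms by (simp add: islin_lin_comm)
  finally show ?thesis by (simp add: lin_id)
qed

lemma sum_prod_lin:
  "(\<Sum>(p, q)\<in>Poly_Mapping.keys d. smult (Poly_Mapping.lookup d (p, q)) (F p q)) = lin (\<lambda>(p, q). F p q) d"
  unfolding lin_def by (rule sum.cong) auto

lemma lin_single_coeff:
  "lin (\<lambda>v. Poly_Mapping.single (f v) 1) y = (\<Sum>v\<in>Poly_Mapping.keys y. Poly_Mapping.single (f v) (Poly_Mapping.lookup y v))"
  by (simp add: lin_def)

lemma amul_lin: "amul x y = lin (\<lambda>u. lin (\<lambda>v. Poly_Mapping.single (gmul u v) 1) y) x"
  by (simp add: amul_def lin_def smult_sum)

lemma tens_lin: "tens x y = lin (\<lambda>u. lin (\<lambda>v. Poly_Mapping.single (u, v) 1) y) x"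
  by (simp add: tens_def lin_def smult_sum)

lemma lmul_lin: "lmul x d = lin (\<lambda>u. lin (\<lambda>(p, q). Poly_Mapping.single (gmul u p, q) 1) d) x"
  unfolding lmul_def lin_def
  by (simp add: smult_sum case_prod_beta)

lemma rmul_lin: "rmul d y = lin (\<lambda>(p, q). lin (\<lambda>v. Poly_Mapping.single (p, gmul q v) 1) y) d"
  unfolding rmul_def lin_def
  by (simp add: smult_sum case_prod_beta)

lemma swap2_lin: "swap2 d = lin (\<lambda>(p, q). Poly_Mapping.single (q, p) 1) d"
  unfolding swap2_def lin_def
  by (simp add: case_prod_beta)

lemma tau_lin: "tau d = lin (\<lambda>(p, q, s). Poly_Mapping.single (s, p, q) 1) d"
  unfolding tau_def lin_def
  by (simp add: case_prod_beta)

lemma tens3_lin: "tens3 d z = lin (\<lambda>(p, q). lin (\<lambda>w. Poly_Mapping.single (p, q, w) 1) z) d"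
  unfolding tens3_def lin_def
  by (simp add: smult_sum case_prod_beta)

lemma bracket_left_lin: "bracket_left B a d = lin (\<lambda>(p, q). tens3 (B a (gel p)) (gel q)) d"
  unfolding bracket_left_def lin_def
  by (simp add: case_prod_beta)

section \<open>Free reduction\<close>

definition canc :: "gen \<times> bool \<Rightarrow> gen \<times> bool \<Rightarrow> bool" where
  "canc l m \<longleftrightarrow> fst l = fst m \<and> snd l \<noteq> snd m"

definition linv :: "gen \<times> bool \<Rightarrow> gen \<times> bool" where
  "linv l = (fst l, \<not> snd l)"

lemma canc_iff: "canc l m \<longleftrightarrow> m = linv l"
  by (cases l; cases m) (auto simp: canc_def linv_def)

lemma linv_linv [simp]: "linv (linv l) = l"
  by (simp add: linv_def)

lemma reduced_Nil [simp]: "reduced []"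
  by (simp add: reduced_def)
lemma reduced_single [simp]: "reduced [l]"
  by (simp add: reduced_def)
lemma reduced_Cons_Cons:
  "reduced (l # m # w) \<longleftrightarrow> m \<noteq> linv l \<and> reduced (m # w)"
proof -
  have *: "(\<forall>i. Suc i < Suc (Suc n) \<longrightarrow> Q i) \<longleftrightarrow> Q 0 \<and> (\<forall>i. Suc i < Suc n \<longrightarrow> Q (Suc i))" for Q n
    by (metis Suc_less_eq less_Suc_eq_0_disj zero_less_Suc nat.exhaust)
  show ?thesis
    unfolding reduced_def length_Cons * by (simp add: canc_iff[symmetric] canc_def)
qed

lemma linv_eq_sym: "m = linv l \<longleftrightarrow> l = linv m"
  by (auto simp: linv_def)

lemma reduced_Cons_D: "reduced (l # w) \<Longrightarrow> reduced w"
  by (cases w) (auto simp: reduced_Cons_Cons)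

lemma reduced_append:
  "reduced (u @ v) \<longleftrightarrow> reduced u \<and> reduced v \<and>
      (u \<noteq> [] \<longrightarrow> v \<noteq> [] \<longrightarrow> hd v \<noteq> linv (last u))"
proof (induct u)
  case Nil then show ?case by simp
next
  case (Cons a u)
  show ?case
  proof (cases u)
    case Nil
    then show ?thesis by (cases v) (auto simp: reduced_Cons_Cons)
  next
    case (Cons b u')
    then show ?thesis using Cons.hyps by (auto simp: reduced_Cons_Cons)
  qed
qed

lemma push_simp: "push l (m # s) = (if m = linv l then s else l # m # s)"
  by (cases l; cases m) (auto simp: linv_def)

declare push.simps(2) [simp del] push_simp [simp]

lemma reduced_Cons: "reduced (a # w) \<longleftrightarrow> reduced w \<and> (w \<noteq> [] \<longrightarrow> hd w \<noteq> linv a)"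
  by (cases w) (auto simp: reduced_Cons_Cons)

lemma rev_reduced: "reduced (rev w) \<longleftrightarrow> reduced w"
proof (induct w)
  case Nil then show ?case by simp
next
  case (Cons a w)
  have "reduced (rev (a # w)) \<longleftrightarrow> reduced (rev w) \<and> (w \<noteq> [] \<longrightarrow> a \<noteq> linv (hd w))"
    by (simp add: reduced_append last_rev)
  also have "\<dots> \<longleftrightarrow> reduced (a # w)"
    using Cons.hyps by (auto simp: reduced_Cons linv_eq_sym)
  finally show ?case .
qed

text \<open>Stacks are stored reversed; a stack s is reduced iff rev s is.\<close>

lemma push_reduced: "reduced s \<Longrightarrow> reduced (push l s)"
proof (cases s)
  case (Cons m s')
  assume r: "reduced s"
  show ?thesis
  proof (cases "m = linv l")
    case True then show ?thesis using Cons r by (simp add: push_simp reduced_Cons_D)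
  next
    case False then show ?thesis using Cons r by (simp add: push_simp reduced_Cons_Cons)
  qed
qed (simp add: push_simp)

lemma foldl_push_reduced: "reduced s \<Longrightarrow> reduced (foldl (\<lambda>s l. push l s) s w)"
  by (induct w arbitrary: s) (auto simp: push_reduced)

lemma reduce_reduced [simp]: "reduced (reduce w)"
  by (simp add: reduce_def rev_reduced foldl_push_reduced)

lemma foldl_push_of_reduced:
  "reduced (rev s @ w) \<Longrightarrow> foldl (\<lambda>s l. push l s) s w = rev w @ s"
proof (induct w arbitrary: s)
  case Nil then show ?case by simp
next
  case (Cons a w)
  have "push a s = a # s"
  proof (cases s)
    case (Cons m s')
    have "reduced (rev s' @ [m] @ a # w)" using Cons.prems \<open>s = m # s'\<close> by simp
    then have "reduced ([m] @ a # w)" unfolding reduced_append[of "rev s'"] by blast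
    then have "a \<noteq> linv m" by (simp add: reduced_Cons_Cons)
    then have "m \<noteq> linv a" by (metis linv_linv)
    then show ?thesis using \<open>s = m # s'\<close> by (simp add: push_simp)
  qed simp
  then show ?case using Cons by simp
qed

lemma reduce_id: "reduced w \<Longrightarrow> reduce w = w"
  using foldl_push_of_reduced[of "[]" w] by (simp add: reduce_def)

lemma reduce_reduce [simp]: "reduce (reduce w) = reduce w"
  by (simp add: reduce_id)

definition cinv :: "(gword \<Rightarrow> 'b) \<Rightarrow> bool" where
  "cinv F \<longleftrightarrow> (\<forall>u v l. F (u @ [l, linv l] @ v) = F (u @ v))"

lemma cinv_foldl:
  assumes "cinv F"
  shows "F (rev (foldl (\<lambda>s l. push l s) s w) @ y) = F (rev s @ w @ y)"
proof (induct w arbitrary: s)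
  case Nil then show ?case by simp
next
  case (Cons m w)
  have "F (rev (push m s) @ w @ y) = F (rev s @ m # w @ y)"
  proof (cases s)
    case Nil then show ?thesis by simp
  next
    case (Cons n s')
    show ?thesis
    proof (cases "n = linv m")
      case True
      then have "m = linv n" by simp
      then show ?thesis using Cons assms[unfolded cinv_def, rule_format, of "rev s'" n "w @ y"]
        by (simp add: push_simp)
    next
      case False
      then show ?thesis using Cons by (simp add: push_simp)
    qed
  qed
  then show ?case using Cons by simp
qed

lemma cinv_reduce: "cinv F \<Longrightarrow> F (reduce w) = F w"
  using cinv_foldl[of F "[]" w "[]"] by (simp add: reduce_def)

lemma reduce_cancel: "reduce (u @ [l, linv l] @ v) = reduce (u @ v)"
proof -
  let ?f = "\<lambda>s l. push l s"
  have red: "reduced (foldl ?f [] u)" by (simp add: foldl_push_reduced)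
  have "push (linv l) (push l s) = s" if "reduced s" for s
  proof (cases s)
    case Nil then show ?thesis by simp
  next
    case (Cons m s')
    show ?thesis
    proof (cases "m = linv l")
      case True
      have "push l s = s'" using Cons True by (simp add: push_simp)
      moreover have "push (linv l) s' = linv l # s'"
      proof (cases s')
        case (Cons n s'')
        have "n \<noteq> linv m" using that Cons \<open>s = m # s'\<close> by (simp add: reduced_Cons_Cons)
        then have "n \<noteq> linv (linv l)" using True by simp
        then show ?thesis using Cons by (simp add: push_simp)
      qed simp
      ultimately show ?thesis using Cons True by simp
    next
      case False
      then show ?thesis using Cons by (simp add: push_simp)
    qed
  qed
  then show ?thesis using red by (simp add: reduce_def)
qed

lemma cinv_reduce_app: "cinv (\<lambda>w. reduce (u @ w @ v))"
  unfolding cinv_def using reduce_cancel by (metis append.assoc)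

lemma reduce_app_left: "reduce (reduce u @ v) = reduce (u @ v)"
  using cinv_reduce[OF cinv_reduce_app[of "[]" v], of u] by simp

lemma reduce_app_right: "reduce (u @ reduce v) = reduce (u @ v)"
  using cinv_reduce[OF cinv_reduce_app[of u "[]"], of v] by simp

lemma gmul_assoc: "gmul (gmul u v) w = gmul u (gmul v w)"
  unfolding gmul_def by (simp add: reduce_app_left reduce_app_right)

lemma gmul_Nil_left: "gmul [] u = reduce u"
  by (simp add: gmul_def)
lemma gmul_Nil_right: "gmul u [] = reduce u"
  by (simp add: gmul_def)
lemma gmul_Nil_left_red [simp]: "reduced u \<Longrightarrow> gmul [] u = u"
  by (simp add: gmul_def reduce_id)
lemma gmul_Nil_right_red [simp]: "reduced u \<Longrightarrow> gmul u [] = u"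
  by (simp add: gmul_def reduce_id)
lemma gmul_reduced [simp]: "reduced (gmul u v)"
  by (simp add: gmul_def)
lemma gmul_reduce_left [simp]: "gmul (reduce u) v = gmul u v"
  by (simp add: gmul_def reduce_app_left)
lemma gmul_reduce_right [simp]: "gmul u (reduce v) = gmul u v"
  by (simp add: gmul_def reduce_app_right)
lemma gmul_app: "gmul u v = reduce (u @ v)"
  by (simp add: gmul_def)

definition winv :: "gword \<Rightarrow> gword" where
  "winv w = rev (map linv w)"

lemma reduce_inv_cancel: "reduce (u @ winv u @ v) = reduce v"
proof (induct u rule: rev_induct)
  case Nil then show ?case by (simp add: winv_def)
next
  case (snoc a u)
  have "reduce ((u @ [a]) @ winv (u @ [a]) @ v) = reduce (u @ [a, linv a] @ winv u @ v)"
    by (simp add: winv_def)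
  also have "\<dots> = reduce (u @ winv u @ v)" by (rule reduce_cancel)
  finally show ?case using snoc by simp
qed

lemma gmul_winv: "gmul u (winv u) = []"
  using reduce_inv_cancel[of u "[]"] by (simp add: gmul_def reduce_id)

lemma winv_winv [simp]: "winv (winv w) = w"
  by (simp add: winv_def rev_map comp_def)

lemma gmul_winv': "gmul (winv u) u = []"
  using gmul_winv[of "winv u"] by simp

lemma reduced_winv: "reduced w \<Longrightarrow> reduced (winv w)"
proof (induct w)
  case Nil then show ?case by (simp add: winv_def)
next
  case (Cons a w)
  then show ?case
    by (cases w) (auto simp: winv_def reduced_append reduced_Cons_Cons linv_def dest: reduced_Cons_D)
qed

lemma gmul_cancel_left: "reduced v \<Longrightarrow> gmul (winv u) (gmul u v) = v"
  by (metis gmul_Nil_left_red gmul_assoc gmul_winv')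

lemma gmul_Cons_red: "reduced (l # w) \<Longrightarrow> gmul [l] w = l # w"
  by (simp add: gmul_def reduce_id)

lemma positive_reduced: "\<forall>l\<in>set w. snd l \<Longrightarrow> reduced w"
proof (induct w)
  case Nil then show ?case by simp
next
  case (Cons a w)
  then show ?case by (cases w) (auto simp: reduced_Cons_Cons linv_def)
qed

definition kmap :: "('a \<Rightarrow> 'b) \<Rightarrow> ('a \<Rightarrow>\<^sub>0 'k::field) \<Rightarrow> ('b \<Rightarrow>\<^sub>0 'k)" where
  "kmap f D = lin (\<lambda>k. Poly_Mapping.single (f k) 1) D"

lemma kmap_single [simp]: "kmap f (Poly_Mapping.single k c) = Poly_Mapping.single (f k) c"
  by (simp add: kmap_def)

lemma islin_kmap [simp, intro]: "islin (kmap f)"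
  by (simp add: kmap_def[abs_def])

lemma kmap_add: "kmap f (x + y) = kmap f x + kmap f y"
  by (simp add: kmap_def lin_add)
lemma kmap_diff: "kmap f (x - y) = kmap f x - kmap f y"
  by (simp add: kmap_def lin_diff)
lemma kmap_uminus: "kmap f (- x) = - kmap f x"
  by (simp add: kmap_def lin_uminus)
lemma kmap_smult: "kmap f (smult c x) = smult c (kmap f x)"
  by (simp add: kmap_def lin_smult)
lemma kmap_zero [simp]: "kmap f 0 = 0"
  by (simp add: kmap_def)

lemma kmap_kmap: "kmap f (kmap g D) = kmap (\<lambda>k. f (g k)) D"
  by (simp add: kmap_def lin_lin)

lemma kmap_cong: "(\<And>k. k \<in> Poly_Mapping.keys D \<Longrightarrow> f k = g k) \<Longrightarrow> kmap f D = kmap g D"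
  unfolding kmap_def by (rule lin_cong) simp

lemma kmap_id: "(\<And>k. k \<in> Poly_Mapping.keys D \<Longrightarrow> f k = k) \<Longrightarrow> kmap f D = D"
  using kmap_cong[of D f "\<lambda>k. k"] by (simp add: kmap_def lin_id)

lemma keys_kmap: "Poly_Mapping.keys (kmap f D) \<subseteq> f ` Poly_Mapping.keys D"
  using keys_lin[of "\<lambda>k. Poly_Mapping.single (f k) 1" D] by (auto simp: kmap_def)

lemma lin_kmap: "lin F (kmap f D) = lin (\<lambda>k. F (f k)) D"
  by (simp add: kmap_def lin_lin)

lemma amul_single [simp]:
  "amul (Poly_Mapping.single u (a::'k::field)) (Poly_Mapping.single v b) = Poly_Mapping.single (gmul u v) (a * b)"
  by (simp add: amul_lin mult.commute)

lemma tens_single [simp]: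
  "tens (Poly_Mapping.single u (a::'k::field)) (Poly_Mapping.single v b) = Poly_Mapping.single (u, v) (a * b)"
  by (simp add: tens_lin mult.commute)

lemma lmul_gel: "lmul (gel u) D = kmap (\<lambda>(p, q). (gmul u p, q)) D"
  by (simp add: lmul_lin gel_def kmap_def case_prod_unfold)

lemma rmul_gel: "rmul D (gel v) = kmap (\<lambda>(p, q). (p, gmul q v)) D"
  unfolding rmul_lin gel_def kmap_def by (simp add: case_prod_unfold)

lemma swap2_kmap: "swap2 D = kmap (\<lambda>(p, q). (q, p)) D"
  by (simp add: swap2_lin kmap_def case_prod_unfold)

lemma tau_kmap: "tau D = kmap (\<lambda>(p, q, s). (s, p, q)) D"
  by (simp add: tau_lin kmap_def case_prod_unfold)

lemma tens3_gel: "tens3 D (gel w) = kmap (\<lambda>(p, q). (p, q, w)) D"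
  by (simp add: tens3_lin gel_def kmap_def case_prod_unfold)

lemma amul_gel [simp]: "amul (gel u) (gel v) = (gel (gmul u v) :: _ \<Rightarrow>\<^sub>0 'k::field)"
  by (simp add: gel_def)

lemma tens_gel [simp]: "tens (gel u) (gel v) = (Poly_Mapping.single (u, v) 1 :: _ \<Rightarrow>\<^sub>0 'k::field)"
  by (simp add: gel_def)

lemma t3_gel [simp]: "t3 (gel u) (gel v) (gel w) = (Poly_Mapping.single (u, v, w) 1 :: _ \<Rightarrow>\<^sub>0 'k::field)"
  unfolding t3_def tens_gel by (simp add: tens3_lin gel_def)

lemma aone_gel: "aone = gel []"
  by (simp add: aone_def)

lemma islin_lin_param [intro]: "(\<And>u. islin (G u)) \<Longrightarrow> islin (\<lambda>y. lin (\<lambda>u. G u y) x)"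
  unfolding islin_def by (simp add: lin_fadd lin_fsmult)

lemma islin_amul1 [intro]: "islin (\<lambda>x. amul x y)"
  by (simp add: amul_lin[abs_def])
lemma islin_amul2 [intro]: "islin (\<lambda>y. amul x y)"
  unfolding amul_lin by (intro islin_lin_param islin_lin)
lemma islin_tens1 [intro]: "islin (\<lambda>x. tens x y)"
  by (simp add: tens_lin[abs_def])
lemma islin_tens2 [intro]: "islin (\<lambda>y. tens x y)"
  unfolding tens_lin by (intro islin_lin_param islin_lin)
lemma islin_lmul1 [intro]: "islin (\<lambda>x. lmul x d)"
  by (simp add: lmul_lin[abs_def])
lemma islin_lmul2 [intro]: "islin (\<lambda>d. lmul x d)"
  unfolding lmul_lin by (intro islin_lin_param islin_lin)
lemma islin_rmul1 [intro]: "islin (\<lambda>d. rmul d y)"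
  by (simp add: rmul_lin[abs_def])
lemma islin_rmul2 [intro]: "islin (\<lambda>y. rmul d y)"
  unfolding rmul_lin
  by (rule islin_lin_param) (auto simp: case_prod_beta)
lemma islin_swap2 [intro]: "islin swap2"
  by (simp add: swap2_lin[abs_def])
lemma islin_tau [intro]: "islin tau"
  by (simp add: tau_lin[abs_def])
lemma islin_tens3_1 [intro]: "islin (\<lambda>d. tens3 d z)"
  by (simp add: tens3_lin[abs_def])
lemma islin_tens3_2 [intro]: "islin (\<lambda>z. tens3 d z)"
  unfolding tens3_lin
  by (rule islin_lin_param) (auto simp: case_prod_beta)
lemma islin_t3_1 [intro]: "islin (\<lambda>x. t3 x y z)"
  unfolding t3_def by (rule islin_comp[of "\<lambda>d. tens3 d z"]) auto
lemma islin_t3_2 [intro]: "islin (\<lambda>y. t3 x y z)"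
  unfolding t3_def by (rule islin_comp[of "\<lambda>d. tens3 d z"]) auto
lemma islin_t3_3 [intro]: "islin (\<lambda>z. t3 x y z)"
  unfolding t3_def by auto
lemma islin_bl2 [intro]: "islin (\<lambda>d. bracket_left B a d)"
  by (simp add: bracket_left_lin[abs_def])

section \<open>Four-sided actions on A \<otimes> A\<close>

definition act :: "gword \<Rightarrow> gword \<Rightarrow> gword \<Rightarrow> gword \<Rightarrow> (gword \<times> gword \<Rightarrow>\<^sub>0 'k::field) \<Rightarrow> (gword \<times> gword \<Rightarrow>\<^sub>0 'k)" where
  "act a b c d X = kmap (\<lambda>(p, q). (gmul a (gmul p b), gmul c (gmul q d))) X"

definition rk2 :: "(gword \<times> gword \<Rightarrow>\<^sub>0 'k::field) \<Rightarrow> bool" where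
  "rk2 X \<longleftrightarrow> (\<forall>k\<in>Poly_Mapping.keys X. reduced (fst k) \<and> reduced (snd k))"

lemma reduce_mid: "reduce (u @ reduce v @ w) = reduce (u @ v @ w)"
  using cinv_reduce[OF cinv_reduce_app[of u w], of v] by simp

lemma reduce_app_right2: "reduce (u @ v @ reduce w) = reduce (u @ v @ w)"
  using reduce_app_right[of "u @ v" w] by simp

lemma reduce_Nil [simp]: "reduce [] = []"
  by (simp add: reduce_id)

lemma gmul_gmul_app: "gmul (gmul p a) b = gmul p (a @ b)"
  by (simp add: gmul_def reduce_app_left)
lemma gmul_app_gmul: "gmul a (gmul b p) = gmul (a @ b) p"
  by (simp add: gmul_def reduce_app_right)

lemma act_act [simp]: "act a b c d (act a' b' c' d' X) = act (a @ a') (b' @ b) (c @ c') (d' @ d) X"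
  unfolding act_def kmap_kmap
  by (rule kmap_cong) (simp add: case_prod_beta gmul_def reduce_app_left reduce_app_right reduce_mid reduce_app_right2)

lemma act_cong:
  assumes "reduce a = reduce a'" "reduce b = reduce b'" "reduce c = reduce c'" "reduce d = reduce d'"
  shows "act a b c d X = act a' b' c' d' X"
proof -
  have "gmul a z = gmul a' z" "gmul z b = gmul z b'" "gmul c z = gmul c' z" "gmul z d = gmul z d'" for z
    using assms by (metis gmul_reduce_left gmul_reduce_right)+
  then show ?thesis unfolding act_def by simp
qed

lemma act_id: "rk2 X \<Longrightarrow> act [] [] [] [] X = X"
  unfolding act_def rk2_def by (rule kmap_id) (auto simp: gmul_Nil_left gmul_Nil_right reduce_id)

lemma act_id': "rk2 X \<Longrightarrow> reduce a = [] \<Longrightarrow> reduce b = [] \<Longrightarrow> reduce c = [] \<Longrightarrow> reduce d = [] \<Longrightarrow>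
   act a b c d X = X"
  by (subst act_cong[of a "[]" b "[]" c "[]" d "[]"]) (simp_all add: act_id)

lemma act_add: "act a b c d (X + Y) = act a b c d X + act a b c d Y"
  by (simp add: act_def kmap_add)
lemma act_diff: "act a b c d (X - Y) = act a b c d X - act a b c d Y"
  by (simp add: act_def kmap_diff)
lemma act_uminus: "act a b c d (- X) = - act a b c d X"
  by (simp add: act_def kmap_uminus)
lemma act_smult: "act a b c d (smult k X) = smult k (act a b c d X)"
  by (simp add: act_def kmap_smult)
lemma act_zero [simp]: "act a b c d 0 = 0"
  by (simp add: act_def)
lemma islin_act [intro]: "islin (act a b c d)"
  by (simp add: act_def[abs_def])

lemmas act_lin = act_add act_diff act_uminus act_smult

lemma swap2_act: "swap2 (act a b c d X) = act c d a b (swap2 X)"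
  unfolding act_def swap2_kmap kmap_kmap by (rule kmap_cong) (simp add: case_prod_beta)

lemma swap2_swap2 [simp]: "swap2 (swap2 (X :: _ \<Rightarrow>\<^sub>0 'k::field)) = X"
  unfolding swap2_kmap kmap_kmap by (rule kmap_id) (simp add: case_prod_beta)

lemma swap2_add: "swap2 ((X :: _ \<Rightarrow>\<^sub>0 'k::field) + Y) = swap2 X + swap2 Y"
  by (simp add: swap2_kmap kmap_add)
lemma swap2_diff: "swap2 ((X :: _ \<Rightarrow>\<^sub>0 'k::field) - Y) = swap2 X - swap2 Y"
  by (simp add: swap2_kmap kmap_diff)
lemma swap2_uminus: "swap2 (- (X :: _ \<Rightarrow>\<^sub>0 'k::field)) = - swap2 X"
  by (simp add: swap2_kmap kmap_uminus)
lemma swap2_smult: "swap2 (smult (k::'k::field) X) = smult k (swap2 X)"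
  by (simp add: swap2_kmap kmap_smult)
lemma swap2_zero [simp]: "swap2 0 = (0 :: _ \<Rightarrow>\<^sub>0 'k::field)"
  by (simp add: swap2_kmap)
lemmas swap2_linr = swap2_add swap2_diff swap2_uminus swap2_smult

lemma rk2_kmap: "(\<And>k. k \<in> Poly_Mapping.keys X \<Longrightarrow> reduced (fst (f k)) \<and> reduced (snd (f k))) \<Longrightarrow> rk2 (kmap f X)"
  unfolding rk2_def using keys_kmap[of f X] by blast

lemma rk2_act [simp]: "rk2 (act a b c d X)"
  unfolding act_def by (rule rk2_kmap) (simp add: case_prod_beta)
lemma rk2_add [simp]: "rk2 X \<Longrightarrow> rk2 Y \<Longrightarrow> rk2 (X + Y)"
  unfolding rk2_def
proof
  fix k assume "\<forall>k\<in>Poly_Mapping.keys X. reduced (fst k) \<and> reduced (snd k)"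
    "\<forall>k\<in>Poly_Mapping.keys Y. reduced (fst k) \<and> reduced (snd k)" "k \<in> Poly_Mapping.keys (X + Y)"
  moreover have "Poly_Mapping.keys (X + Y) \<subseteq> Poly_Mapping.keys X \<union> Poly_Mapping.keys Y" by (rule keys_add)
  ultimately show "reduced (fst k) \<and> reduced (snd k)" by blast
qed
lemma rk2_uminus [simp]: "rk2 X \<Longrightarrow> rk2 (- X)"
  unfolding rk2_def by (simp add: in_keys_iff)
lemma rk2_diff [simp]: "rk2 X \<Longrightarrow> rk2 Y \<Longrightarrow> rk2 (X - Y)"
  using rk2_add[of X "- Y"] by simp
lemma rk2_smult [simp]: "rk2 X \<Longrightarrow> rk2 (smult k X)"
  unfolding rk2_def by (simp add: in_keys_iff)
lemma rk2_zero [simp]: "rk2 0"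
  by (simp add: rk2_def)
lemma rk2_single [simp]: "reduced p \<Longrightarrow> reduced q \<Longrightarrow> rk2 (Poly_Mapping.single (p, q) (c::'k::field))"
  by (simp add: rk2_def)
lemma rk2_swap2 [simp]: "rk2 X \<Longrightarrow> rk2 (swap2 X)"
  unfolding swap2_kmap by (rule rk2_kmap) (auto simp: rk2_def case_prod_beta)

lemma lmul_gel_act: "rk2 X \<Longrightarrow> lmul (gel u) (X :: _ \<Rightarrow>\<^sub>0 'k::field) = act u [] [] [] X"
  unfolding lmul_gel act_def rk2_def
  by (rule kmap_cong) (simp add: case_prod_beta gmul_Nil_right gmul_Nil_left reduce_id)
lemma rmul_gel_act: "rk2 X \<Longrightarrow> rmul (X :: _ \<Rightarrow>\<^sub>0 'k::field) (gel v) = act [] [] [] v X"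
  unfolding rmul_gel act_def rk2_def
  by (rule kmap_cong) (simp add: case_prod_beta gmul_Nil_right gmul_Nil_left reduce_id)

section \<open>The bracket on letters\<close>

fun bk :: "gen \<Rightarrow> nat \<times> nat" where
  "bk (Al i) = (0, i)" | "bk (Be i) = (0, i)" | "bk (Ga k) = (1, k)"

definition blt :: "gen \<Rightarrow> gen \<Rightarrow> bool" where
  "blt x y \<longleftrightarrow> fst (bk x) < fst (bk y) \<or> (fst (bk x) = fst (bk y) \<and> snd (bk x) < snd (bk y))"

fun isA :: "gen \<Rightarrow> bool" where
  "isA (Al i) = True" | "isA (Be i) = False" | "isA (Ga k) = False"
fun isB :: "gen \<Rightarrow> bool" where
  "isB (Al i) = False" | "isB (Be i) = True" | "isB (Ga k) = False"

definition eps :: "gen \<Rightarrow> gen \<Rightarrow> 'k::field" where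
  "eps x y = (if bk x = bk y then (if isA x then 1 else -1) else if blt x y then 1 else -1)"
definition phi :: "gen \<Rightarrow> gen \<Rightarrow> 'k::field" where
  "phi x y = (if bk x = bk y then 1 else -1)"
definition sgn :: "gen \<Rightarrow> 'k::field" where
  "sgn x = (if isB x then -1 else 1)"

abbreviation pos :: "gen \<Rightarrow> gen \<times> bool" where "pos x \<equiv> (x, True)"

definition P :: "gen \<Rightarrow> gen \<Rightarrow> (gword \<times> gword \<Rightarrow>\<^sub>0 'k::field)" where
  "P x y = (if x = y then
      smult (sgn x / 2) (Poly_Mapping.single ([pos x, pos x], []) 1 - Poly_Mapping.single ([], [pos x, pos x]) 1)
    else smult (eps x y / 2) (Poly_Mapping.single ([pos y, pos x], []) 1 + Poly_Mapping.single ([], [pos x, pos y]) 1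
      - Poly_Mapping.single ([pos x], [pos y]) 1 + Poly_Mapping.single ([pos y], [pos x]) (phi x y)))"

lemma eps_anti: "x \<noteq> y \<Longrightarrow> eps y x = - (eps x y :: 'k::field)"
  by (cases x; cases y) (auto simp: eps_def blt_def)
lemma phi_sym: "phi y x = phi x y"
  by (simp add: phi_def eq_commute)

lemma rk2_P [simp]: "rk2 (P x y)"
  by (simp add: P_def reduced_Cons_Cons linv_def)

lemma P_anti: "P x y = - swap2 (P y x :: _ \<Rightarrow>\<^sub>0 'k::field)"
proof (cases "x = y")
  case True then show ?thesis
    by (simp add: P_def swap2_linr swap2_kmap kmap_smult kmap_diff smult_uminus_right[symmetric])
next
  case False
  have "- swap2 (P y x :: _ \<Rightarrow>\<^sub>0 'k) = smult (- eps y x / 2) (Poly_Mapping.single ([], [pos x, pos y]) 1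
      + Poly_Mapping.single ([pos y, pos x], []) 1 - Poly_Mapping.single ([pos x], [pos y]) 1
      + Poly_Mapping.single ([pos y], [pos x]) (phi y x))"
    using False by (simp add: P_def swap2_kmap kmap_smult kmap_add kmap_diff smult_uminus_left)
  also have "\<dots> = P x y"
    using False by (simp add: P_def eps_anti[OF False] phi_sym algebra_simps)
  finally show ?thesis ..
qed

definition ew :: "gen \<times> bool \<Rightarrow> gword" where "ew l = (if snd l then [] else [l])"
definition sg :: "gen \<times> bool \<Rightarrow> 'k::field" where "sg l = (if snd l then 1 else -1)"

definition Bl :: "gen \<times> bool \<Rightarrow> gen \<times> bool \<Rightarrow> (gword \<times> gword \<Rightarrow>\<^sub>0 'k::field)" where
  "Bl l m = smult (sg l * sg m) (act (ew m) (ew l) (ew l) (ew m) (P (fst l) (fst m)))"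

lemma rk2_Bl [simp]: "rk2 (Bl l m)"
  by (simp add: Bl_def)

lemma Bl_anti: "Bl l m = - swap2 (Bl m l)"
proof -
  have "Bl l m = smult (sg l * sg m) (act (ew m) (ew l) (ew l) (ew m) (- swap2 (P (fst m) (fst l))))"
    by (simp add: Bl_def P_anti[of "fst l"])
  also have "\<dots> = - swap2 (Bl m l)"
    by (simp add: Bl_def swap2_linr swap2_act act_lin smult_uminus_right mult.commute)
  finally show ?thesis .
qed

lemma reduce_pair_cancel [simp]: "reduce [l, linv l] = []" "reduce [linv l, l] = []"
  using reduce_cancel[of "[]" l "[]"] reduce_cancel[of "[]" "linv l" "[]"] by simp_all

lemma ew_sg_cases: "snd l \<Longrightarrow> ew l = [] \<and> sg l = 1" "\<not> snd l \<Longrightarrow> ew l = [l] \<and> sg l = -1"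
  by (simp_all add: ew_def sg_def)

lemma Bl_cancel: "act [] [] [] [linv l] (Bl m l) + act [l] [] [] [] (Bl m (linv l)) = 0"
proof (cases "snd l")
  case True
  have e1: "ew l = []" "ew (linv l) = [linv l]" "sg l = 1" "sg (linv l) = -1" "fst (linv l) = fst l"
    using True by (simp_all add: ew_def sg_def linv_def)
  have "act [] [] [] [linv l] (Bl m l) = smult (sg m) (act [] (ew m) (ew m) [linv l] (P (fst m) (fst l)))"
    by (simp add: Bl_def e1 act_smult)
  moreover have "act [l] [] [] [] (Bl m (linv l)) = - smult (sg m) (act [l, linv l] (ew m) (ew m) [linv l] (P (fst m) (fst l)))"
    by (simp add: Bl_def e1 act_smult act_uminus smult_uminus_left)
  moreover have "act [l, linv l] (ew m) (ew m) [linv l] (P (fst m) (fst l)) = act [] (ew m) (ew m) [linv l] (P (fst m) (fst l))"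
    by (rule act_cong) simp_all
  ultimately show ?thesis by (metis add.right_inverse)
next
  case False
  have e1: "ew l = [l]" "ew (linv l) = []" "sg l = -1" "sg (linv l) = 1" "fst (linv l) = fst l"
    using False by (simp_all add: ew_def sg_def linv_def)
  have "act [] [] [] [linv l] (Bl m l) = - smult (sg m) (act [l] (ew m) (ew m) [l, linv l] (P (fst m) (fst l)))"
    by (simp add: Bl_def e1 act_smult act_uminus smult_uminus_left)
  moreover have "act [l] (ew m) (ew m) [l, linv l] (P (fst m) (fst l)) = act [l] (ew m) (ew m) [] (P (fst m) (fst l))"
    by (rule act_cong) simp_all
  moreover have "act [l] [] [] [] (Bl m (linv l)) = smult (sg m) (act [l] (ew m) (ew m) [] (P (fst m) (fst l)))"
    by (simp add: Bl_def e1 act_smult)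
  ultimately show ?thesis by (metis add.left_inverse)
qed

fun D :: "gen \<times> bool \<Rightarrow> gword \<Rightarrow> (gword \<times> gword \<Rightarrow>\<^sub>0 'k::field)" where
  "D l [] = 0"
| "D l (m # w) = act [] [] [] w (Bl l m) + act [m] [] [] [] (D l w)"

fun Bw :: "gword \<Rightarrow> gword \<Rightarrow> (gword \<times> gword \<Rightarrow>\<^sub>0 'k::field)" where
  "Bw [] w = 0"
| "Bw (m # u) w = act [] u [] [] (D m w) + act [] [] [m] [] (Bw u w)"

lemma rk2_D [simp]: "rk2 (D l w)"
  by (cases w) simp_all

lemma rk2_Bw [simp]: "rk2 (Bw u w)"
  by (cases u) simp_all

lemma D_app: "D l (w1 @ w2) = act [] [] [] w2 (D l w1) + act w1 [] [] [] (D l w2)"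
  by (induct w1) (simp_all add: act_id act_add algebra_simps)

lemma D_single: "D l [m] = Bl l m"
  by (simp add: act_id)

lemma D_pair: "D l [m, linv m] = 0"
  using Bl_cancel[of m l] by (simp add: act_id)

lemma cinv_D: "cinv (D l :: _ \<Rightarrow> _ \<Rightarrow>\<^sub>0 'k::field)"
  unfolding cinv_def
proof (intro allI)
  fix u v m
  have e: "(D l ([m, linv m] @ v) :: _ \<Rightarrow>\<^sub>0 'k) = act [] [] [] v (D l [m, linv m]) + act [m, linv m] [] [] [] (D l v)"
    by (rule D_app)
  have "(D l (u @ [m, linv m] @ v) :: _ \<Rightarrow>\<^sub>0 'k) =
     act [] [] [] ([m, linv m] @ v) (D l u) + act u [] [] [] (D l ([m, linv m] @ v))"
    by (rule D_app)
  also have "\<dots> = act [] [] [] ([m, linv m] @ v) (D l u) + act (u @ [m, linv m]) [] [] [] (D l v)"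
    unfolding e D_pair by (simp add: act_add del: D.simps)
  also have "\<dots> = act [] [] [] v (D l u) + act u [] [] [] (D l v)"
    using reduce_cancel[of "[]" m v] reduce_cancel[of u m "[]"]
    by (intro arg_cong2[where f = "(+)"] act_cong) simp_all
  also have "\<dots> = D l (u @ v)" by (simp add: D_app del: D.simps)
  finally show "(D l (u @ [m, linv m] @ v) :: _ \<Rightarrow>\<^sub>0 'k) = D l (u @ v)" .
qed

lemma D_reduce: "D l (reduce w) = D l w"
  by (rule cinv_reduce[OF cinv_D])

lemma Bw_app2: "Bw u (w1 @ w2) = act [] [] [] w2 (Bw u w1) + act w1 [] [] [] (Bw u w2)"
  by (induct u) (simp_all add: D_app act_add algebra_simps del: D.simps)

lemma Bw_Nil2 [simp]: "Bw u [] = 0"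
  by (induct u) simp_all

lemma Bw_single: "Bw [l] [m] = Bl l m"
  by (simp add: act_id)

lemma Bw_pair: "Bw u [m, linv m] = 0"
  by (induct u) (simp_all add: D_pair del: D.simps)

lemma cinv_Bw2: "cinv (Bw u :: _ \<Rightarrow> _ \<Rightarrow>\<^sub>0 'k::field)"
  unfolding cinv_def
proof (intro allI)
  fix a b m
  have e: "(Bw u ([m, linv m] @ b) :: _ \<Rightarrow>\<^sub>0 'k) = act [] [] [] b (Bw u [m, linv m]) + act [m, linv m] [] [] [] (Bw u b)"
    by (rule Bw_app2)
  have "(Bw u (a @ [m, linv m] @ b) :: _ \<Rightarrow>\<^sub>0 'k) =
     act [] [] [] ([m, linv m] @ b) (Bw u a) + act a [] [] [] (Bw u ([m, linv m] @ b))"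
    by (rule Bw_app2)
  also have "\<dots> = act [] [] [] ([m, linv m] @ b) (Bw u a) + act (a @ [m, linv m]) [] [] [] (Bw u b)"
    unfolding e Bw_pair by (simp add: act_add)
  also have "\<dots> = act [] [] [] b (Bw u a) + act a [] [] [] (Bw u b)"
    using reduce_cancel[of "[]" m b] reduce_cancel[of a m "[]"]
    by (intro arg_cong2[where f = "(+)"] act_cong) simp_all
  also have "\<dots> = Bw u (a @ b)" by (simp add: Bw_app2)
  finally show "(Bw u (a @ [m, linv m] @ b) :: _ \<Rightarrow>\<^sub>0 'k) = Bw u (a @ b)" .
qed

lemma Bw_reduce2: "Bw u (reduce w) = Bw u w"
  by (rule cinv_reduce[OF cinv_Bw2])

lemma D_anti: "D m w = - swap2 (Bw w [m] :: _ \<Rightarrow>\<^sub>0 'k::field)"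
proof (induct w)
  case Nil then show ?case by simp
next
  case (Cons n w)
  have "(Bw (n # w) [m] :: _ \<Rightarrow>\<^sub>0 'k) = act [] w [] [] (Bl n m) + act [] [] [n] [] (Bw w [m])"
    by (simp add: D_single del: D.simps)
  then have "- swap2 (Bw (n # w) [m] :: _ \<Rightarrow>\<^sub>0 'k) = act [] [] [] w (- swap2 (Bl n m)) + act [n] [] [] [] (- swap2 (Bw w [m]))"
    by (simp add: swap2_linr swap2_act act_lin)
  also have "\<dots> = (D m (n # w) :: _ \<Rightarrow>\<^sub>0 'k)"
    by (simp only: D.simps(2) Bl_anti[of m n] Cons.hyps)
  finally show ?case by simp
qed

lemma Bw_anti: "Bw u w = - swap2 (Bw w u :: _ \<Rightarrow>\<^sub>0 'k::field)"
proof (induct u)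
  case Nil then show ?case by simp
next
  case (Cons m u)
  have "(Bw w (m # u) :: _ \<Rightarrow>\<^sub>0 'k) = act [] [] [] u (Bw w [m]) + act [m] [] [] [] (Bw w u)"
    using Bw_app2[of w "[m]" u] by simp
  then have "- swap2 (Bw w (m # u) :: _ \<Rightarrow>\<^sub>0 'k) = act [] u [] [] (- swap2 (Bw w [m])) + act [] [] [m] [] (- swap2 (Bw w u))"
    by (simp add: swap2_linr swap2_act act_lin)
  also have "\<dots> = (Bw (m # u) w :: _ \<Rightarrow>\<^sub>0 'k)"
    by (simp only: Bw.simps(2) D_anti[of m w] Cons.hyps)
  finally show ?case by simp
qed

lemma Bw_reduce1: "Bw (reduce u) w = Bw u w"
  by (metis Bw_anti Bw_reduce2)

lemma Bw_app1: "Bw (u1 @ u2) w = act [] u2 [] [] (Bw u1 w) + act [] [] u1 [] (Bw u2 w)"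
  by (induct u1) (simp_all add: act_id act_add algebra_simps del: D.simps)

section \<open>The double bracket\<close>

definition Bk :: "(gword \<Rightarrow>\<^sub>0 'k::field) \<Rightarrow> (gword \<Rightarrow>\<^sub>0 'k) \<Rightarrow> (gword \<times> gword \<Rightarrow>\<^sub>0 'k)" where
  "Bk x y = lin (\<lambda>u. lin (\<lambda>v. Bw u v) y) x"

lemma Bk_gel [simp]: "Bk (gel u) (gel v) = Bw u v"
  by (simp add: Bk_def gel_def)

lemma islin_Bk1 [intro]: "islin (\<lambda>x. Bk x y)"
  by (simp add: Bk_def[abs_def])
lemma islin_Bk2 [intro]: "islin (\<lambda>y. Bk x y)"
  unfolding Bk_def by (intro islin_lin_param islin_lin)
lemma islin_Bk2' [intro]: "islin (Bk x)"
  using islin_Bk2[of x] by simp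

lemma rk2_Bk_gel: "rk2 (Bk (gel u) (gel v))"
  by simp

lemma Bk_anti: "Bk a b = - swap2 (Bk b a)"
proof -
  have "- swap2 (Bk b a) = lin (\<lambda>v. lin (\<lambda>u. - swap2 (Bw v u)) a) b"
    unfolding Bk_def
    by (simp add: islin_lin_comm[of "\<lambda>x. - swap2 x"] islin_fuminus islin_swap2 lin_fuminus)
  also have "\<dots> = lin (\<lambda>v. lin (\<lambda>u. Bw u v) a) b"
    by (simp add: Bw_anti[symmetric])
  also have "\<dots> = Bk a b"
    unfolding Bk_def by (rule lin_swap[symmetric])
  finally show ?thesis ..
qed

lemma gel_eq: "gel u = Poly_Mapping.single u 1"
  by (simp add: gel_def)

lemma Bk_leibniz: "Bk (a :: _ \<Rightarrow>\<^sub>0 'k::field) (amul b c) = rmul (Bk a b) c + lmul b (Bk a c)"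
proof -
  have base: "(Bk (gel u) (gel (gmul v w)) :: _ \<Rightarrow>\<^sub>0 'k) = rmul (Bk (gel u) (gel v)) (gel w) + lmul (gel v) (Bk (gel u) (gel w))"
    for u v w
  proof -
    have "Bk (gel u) (gel (gmul v w)) = (Bw u (v @ w) :: _ \<Rightarrow>\<^sub>0 'k)"
      by (simp add: gmul_def Bw_reduce2)
    also have "\<dots> = act [] [] [] w (Bw u v) + act v [] [] [] (Bw u w)"
      by (rule Bw_app2)
    finally show ?thesis by (simp add: rmul_gel_act lmul_gel_act)
  qed
  have s1: "(Bk (gel u) (amul (gel v) c) :: _ \<Rightarrow>\<^sub>0 'k) = rmul (Bk (gel u) (gel v)) c + lmul (gel v) (Bk (gel u) c)" for u v
    by (rule lin_induct_eq[OF islin_comp[OF islin_Bk2' islin_amul2]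
          islin_fadd[OF islin_rmul2 islin_comp[OF islin_lmul2 islin_Bk2']]])
       (simp add: base[unfolded gel_eq] gel_eq)
  have s2: "(Bk (gel u) (amul b c) :: _ \<Rightarrow>\<^sub>0 'k) = rmul (Bk (gel u) b) c + lmul b (Bk (gel u) c)" for u
    by (rule lin_induct_eq[OF islin_comp[OF islin_Bk2' islin_amul1]
          islin_fadd[OF islin_comp[OF islin_rmul1 islin_Bk2'] islin_lmul1]])
       (simp add: s1[unfolded gel_eq] gel_eq)
  show ?thesis
    by (rule lin_induct_eq[OF islin_Bk1
          islin_fadd[OF islin_comp[OF islin_rmul1 islin_Bk1] islin_comp[OF islin_lmul2 islin_Bk1]]])
       (simp add: s2[unfolded gel_eq] gel_eq)
qed

theorem double_bracket_Bk: "double_bracket_on A Bk"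
  unfolding double_bracket_on_def
  by (auto simp: islin_add[OF islin_Bk1] islin_smult[OF islin_Bk1] Bk_leibniz intro: Bk_anti)

definition BLk :: "gword \<Rightarrow> gword \<times> gword \<Rightarrow> (gword \<times> gword \<times> gword \<Rightarrow>\<^sub>0 'k::field)" where
  "BLk a k = kmap (\<lambda>(x, y). (x, y, snd k)) (Bw a (fst k))"

definition act3 :: "gword \<Rightarrow> gword \<Rightarrow> (gword \<times> gword \<times> gword \<Rightarrow>\<^sub>0 'k::field) \<Rightarrow> (gword \<times> gword \<times> gword \<Rightarrow>\<^sub>0 'k)" where
  "act3 c d X = kmap (\<lambda>(p, q, s). (gmul c p, q, gmul s d)) X"

lemma reduce_gmul [simp]: "reduce (gmul a b) = gmul a b"
  by (simp add: reduce_id)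

declare reduce_id [simp]

lemma islin_act3 [intro]: "islin (act3 c d)"
  by (simp add: act3_def[abs_def])

lemma kmap_cong_rk2:
  assumes "rk2 X" "\<And>x y. reduced x \<Longrightarrow> reduced y \<Longrightarrow> f (x, y) = g (x, y)"
  shows "kmap f X = kmap g X"
  using assms unfolding rk2_def by (intro kmap_cong) auto

lemma bl_gel: "bracket_left Bk (gel a) X = lin (BLk a) X"
  unfolding bracket_left_lin BLk_def
  by (rule lin_cong) (auto simp: tens3_gel)

lemma triple_gel: "triple_bracket Bk (gel a) (gel b) (gel c) =
   lin (BLk a) (Bw b c) + tau (lin (BLk b) (Bw c a)) + tau (tau (lin (BLk c) (Bw a b)))"
  by (simp add: triple_bracket_def bl_gel)

lemma tau_lin_comm: "tau (lin F X) = lin (\<lambda>k. tau (F k)) X"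
  by (rule islin_lin_comm) auto
lemma act3_lin_comm: "act3 c d (lin F X) = lin (\<lambda>k. act3 c d (F k)) X"
  by (rule islin_lin_comm) auto

lemma lin_act: "lin F (act a b c d X) = lin (\<lambda>(p, q). F (gmul a (gmul p b), gmul c (gmul q d))) X"
  unfolding act_def lin_kmap by (simp add: case_prod_unfold)

lemma lin_add_fun: "lin F (X + Y) = lin F X + lin F Y"
  by (rule lin_add)

definition E1 :: "gword \<Rightarrow> gword \<Rightarrow> gword \<Rightarrow> gword \<Rightarrow> (gword \<times> gword \<times> gword \<Rightarrow>\<^sub>0 'k::field)" where
  "E1 a b c d = lin (\<lambda>(p, q). kmap (\<lambda>(x, y). (x, gmul y p, q)) (Bw a c)) (Bw b d)"

lemma term1:
  "(lin (BLk a) (Bw b (gmul c d)) :: _ \<Rightarrow>\<^sub>0 'k::field) =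
     act3 [] d (lin (BLk a) (Bw b c)) + act3 c [] (lin (BLk a) (Bw b d)) + E1 a b c d"
proof -
  have "(Bw b (gmul c d) :: _ \<Rightarrow>\<^sub>0 'k) = act [] [] [] d (Bw b c) + act c [] [] [] (Bw b d)"
    by (simp add: gmul_def Bw_reduce2 Bw_app2)
  then have "(lin (BLk a) (Bw b (gmul c d)) :: _ \<Rightarrow>\<^sub>0 'k) =
      lin (BLk a) (act [] [] [] d (Bw b c)) + lin (BLk a) (act c [] [] [] (Bw b d))"
    by (simp add: lin_add)
  also have "lin (BLk a) (act [] [] [] d (Bw b c)) = (act3 [] d (lin (BLk a) (Bw b c)) :: _ \<Rightarrow>\<^sub>0 'k)"
    unfolding lin_act act3_lin_comm
  proof (rule lin_cong)
    fix k assume "k \<in> Poly_Mapping.keys (Bw b c :: _ \<Rightarrow>\<^sub>0 'k)"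
    obtain p q where k: "k = (p, q)" by (cases k)
    show "(case k of (p, q) \<Rightarrow> BLk a (gmul [] (gmul p []), gmul [] (gmul q d))) = (act3 [] d (BLk a k) :: _ \<Rightarrow>\<^sub>0 'k)"
      unfolding k BLk_def act3_def kmap_kmap
      by (simp add: gmul_Nil_left gmul_Nil_right Bw_reduce2)
         (rule kmap_cong_rk2, simp_all add: case_prod_beta)
  qed
  also have "lin (BLk a) (act c [] [] [] (Bw b d)) = (act3 c [] (lin (BLk a) (Bw b d)) + E1 a b c d :: _ \<Rightarrow>\<^sub>0 'k)"
    unfolding lin_act act3_lin_comm E1_def lin_fadd[symmetric]
  proof (rule lin_cong)
    fix k assume kk: "k \<in> Poly_Mapping.keys (Bw b d :: _ \<Rightarrow>\<^sub>0 'k)"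
    obtain p q where k: "k = (p, q)" by (cases k)
    have rq: "reduced q" "reduced p" using kk rk2_Bw[of b d] unfolding rk2_def k by auto
    have "(Bw a (gmul c p) :: _ \<Rightarrow>\<^sub>0 'k) = act [] [] [] p (Bw a c) + act c [] [] [] (Bw a p)"
      by (simp add: gmul_def Bw_reduce2 Bw_app2)
    then show "(case k of (p, q) \<Rightarrow> BLk a (gmul c (gmul p []), gmul [] (gmul q []))) =
        (act3 c [] (BLk a k) + (case k of (p, q) \<Rightarrow> kmap (\<lambda>(x, y). (x, gmul y p, q)) (Bw a c)) :: _ \<Rightarrow>\<^sub>0 'k)"
      unfolding k BLk_def act3_def
      apply (simp add: rq kmap_add kmap_kmap)
      apply (subst add.commute)
      apply (unfold act_def kmap_kmap)
      apply (rule arg_cong2[where f = "(+)"])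
       apply (rule kmap_cong_rk2, simp_all add: case_prod_beta rq)
      apply (rule kmap_cong_rk2, simp_all add: case_prod_beta rq)
      done
  qed
  finally show ?thesis by (simp add: add.assoc)
qed

definition E2 :: "gword \<Rightarrow> gword \<Rightarrow> gword \<Rightarrow> gword \<Rightarrow> (gword \<times> gword \<times> gword \<Rightarrow>\<^sub>0 'k::field)" where
  "E2 a b c d = lin (\<lambda>(p, q). kmap (\<lambda>(x, y). (q, gmul p x, y)) (Bw b d)) (Bw c a)"

lemma tau_add: "tau (X + Y) = tau X + (tau Y :: _ \<Rightarrow>\<^sub>0 'k::field)"
  by (simp add: tau_kmap kmap_add)

lemma term2:
  "(tau (lin (BLk b) (Bw (gmul c d) a)) :: _ \<Rightarrow>\<^sub>0 'k::field) =
     act3 [] d (tau (lin (BLk b) (Bw c a))) + act3 c [] (tau (lin (BLk b) (Bw d a))) + E2 a b c d"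
proof -
  have "(Bw (gmul c d) a :: _ \<Rightarrow>\<^sub>0 'k) = act [] d [] [] (Bw c a) + act [] [] c [] (Bw d a)"
    by (simp add: gmul_def Bw_reduce1 Bw_app1)
  then have "(tau (lin (BLk b) (Bw (gmul c d) a)) :: _ \<Rightarrow>\<^sub>0 'k) =
      tau (lin (BLk b) (act [] d [] [] (Bw c a))) + tau (lin (BLk b) (act [] [] c [] (Bw d a)))"
    by (simp add: lin_add tau_add)
  also have "tau (lin (BLk b) (act [] d [] [] (Bw c a))) =
     (act3 [] d (tau (lin (BLk b) (Bw c a))) + E2 a b c d :: _ \<Rightarrow>\<^sub>0 'k)"
    unfolding lin_act act3_lin_comm tau_lin_comm E2_def lin_fadd[symmetric]
  proof (rule lin_cong)
    fix k assume kk: "k \<in> Poly_Mapping.keys (Bw c a :: _ \<Rightarrow>\<^sub>0 'k)"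
    obtain p q where k: "k = (p, q)" by (cases k)
    have rq: "reduced q" "reduced p" using kk rk2_Bw[of c a] unfolding rk2_def k by auto
    have "(Bw b (gmul p d) :: _ \<Rightarrow>\<^sub>0 'k) = act [] [] [] d (Bw b p) + act p [] [] [] (Bw b d)"
      by (simp add: gmul_def Bw_reduce2 Bw_app2)
    then show "tau (case k of (p, q) \<Rightarrow> BLk b (gmul [] (gmul p d), gmul [] (gmul q []))) =
        (act3 [] d (tau (BLk b k)) + (case k of (p, q) \<Rightarrow> kmap (\<lambda>(x, y). (q, gmul p x, y)) (Bw b d)) :: _ \<Rightarrow>\<^sub>0 'k)"
      unfolding k BLk_def act3_def tau_kmap
      apply (simp add: rq kmap_add kmap_kmap)
      apply (unfold act_def kmap_kmap)
      apply (rule arg_cong2[where f = "(+)"])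
       apply (rule kmap_cong_rk2, simp_all add: case_prod_beta rq)
      apply (rule kmap_cong_rk2, simp_all add: case_prod_beta rq)
      done
  qed
  also have "tau (lin (BLk b) (act [] [] c [] (Bw d a))) = (act3 c [] (tau (lin (BLk b) (Bw d a))) :: _ \<Rightarrow>\<^sub>0 'k)"
    unfolding lin_act act3_lin_comm tau_lin_comm
  proof (rule lin_cong)
    fix k assume kk: "k \<in> Poly_Mapping.keys (Bw d a :: _ \<Rightarrow>\<^sub>0 'k)"
    obtain p q where k: "k = (p, q)" by (cases k)
    have rq: "reduced q" "reduced p" using kk rk2_Bw[of d a] unfolding rk2_def k by auto
    show "tau (case k of (p, q) \<Rightarrow> BLk b (gmul [] (gmul p []), gmul c (gmul q []))) =
        (act3 c [] (tau (BLk b k)) :: _ \<Rightarrow>\<^sub>0 'k)"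
      unfolding k BLk_def act3_def tau_kmap kmap_kmap
      by (simp add: rq kmap_kmap) (rule kmap_cong_rk2, simp_all add: case_prod_beta)
  qed
  finally show ?thesis by (simp add: algebra_simps)
qed

lemma term3:
  "(tau (tau (lin (BLk (gmul c d)) X)) :: _ \<Rightarrow>\<^sub>0 'k::field) =
     act3 [] d (tau (tau (lin (BLk c) X))) + act3 c [] (tau (tau (lin (BLk d) X)))"
  unfolding tau_lin_comm act3_lin_comm lin_fadd[symmetric]
proof (rule lin_cong)
  fix k :: "gword \<times> gword"
  obtain p q where k: "k = (p, q)" by (cases k)
  have "(Bw (gmul c d) p :: _ \<Rightarrow>\<^sub>0 'k) = act [] d [] [] (Bw c p) + act [] [] c [] (Bw d p)"
    by (simp add: gmul_def Bw_reduce1 Bw_app1)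
  then show "tau (tau (BLk (gmul c d) k)) =
      (act3 [] d (tau (tau (BLk c k))) + act3 c [] (tau (tau (BLk d k))) :: _ \<Rightarrow>\<^sub>0 'k)"
    unfolding k BLk_def act3_def tau_kmap
    apply (simp add: kmap_add kmap_kmap)
    apply (unfold act_def kmap_kmap)
    apply (rule arg_cong2[where f = "(+)"])
     apply (rule kmap_cong_rk2, simp_all add: case_prod_beta)
    apply (rule kmap_cong_rk2, simp_all add: case_prod_beta)
    done
qed

lemma kmap_lin: "kmap f Z = lin (\<lambda>k. Poly_Mapping.single (f k) 1) Z"
  by (simp add: kmap_def)

lemma E_cancel: "E1 a b c d + E2 a b c d = (0 :: _ \<Rightarrow>\<^sub>0 'k::field)"
proof -
  have "(E2 a b c d :: _ \<Rightarrow>\<^sub>0 'k) =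
      lin (\<lambda>(p, q). kmap (\<lambda>(x, y). (q, gmul p x, y)) (Bw b d)) (- kmap (\<lambda>(p, q). (q, p)) (Bw a c))"
    unfolding E2_def by (simp add: Bw_anti[of c a] swap2_kmap)
  also have "\<dots> = - lin (\<lambda>(x, y). kmap (\<lambda>(p, q). (x, gmul y p, q)) (Bw b d)) (Bw a c)"
    by (simp add: lin_uminus lin_kmap case_prod_unfold)
  also have "lin (\<lambda>(x, y). kmap (\<lambda>(p, q). (x, gmul y p, q)) (Bw b d)) (Bw a c) = (E1 a b c d :: _ \<Rightarrow>\<^sub>0 'k)"
    unfolding E1_def kmap_lin
    using lin_swap[of "\<lambda>u v. Poly_Mapping.single (fst u, gmul (snd u) (fst v), snd v) 1" "Bw b d" "Bw a c"]
    by (simp add: case_prod_unfold)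
  finally show ?thesis by simp
qed

definition Rw :: "gword \<Rightarrow> gword \<Rightarrow> gword \<Rightarrow> (gword \<times> gword \<times> gword \<Rightarrow>\<^sub>0 'k::field)" where
  "Rw a b c = smult (1/4) (Poly_Mapping.single (gmul c a, b, []) 1 - Poly_Mapping.single (gmul c a, [], b) 1
      - Poly_Mapping.single (c, gmul a b, []) 1 + Poly_Mapping.single (c, a, b) 1
      - Poly_Mapping.single (a, b, c) 1 + Poly_Mapping.single (a, [], gmul b c) 1
      + Poly_Mapping.single ([], gmul a b, c) 1 - Poly_Mapping.single ([], a, gmul b c) 1)"

definition qprhs :: "(gword \<Rightarrow>\<^sub>0 'k::field) \<Rightarrow> (gword \<Rightarrow>\<^sub>0 'k) \<Rightarrow> (gword \<Rightarrow>\<^sub>0 'k) \<Rightarrow> (gword \<times> gword \<times> gword \<Rightarrow>\<^sub>0 'k)" where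
  "qprhs a b c = smult (1/4)
       (t3 (amul c a) b aone - t3 (amul c a) aone b - t3 c (amul a b) aone + t3 c a b
        - t3 a b c + t3 a aone (amul b c) + t3 aone (amul a b) c - t3 aone a (amul b c))"

lemma qprhs_gel: "qprhs (gel a) (gel b) (gel c) = (Rw a b c :: _ \<Rightarrow>\<^sub>0 'k::field)"
  by (simp add: qprhs_def Rw_def aone_gel)

lemma act3_single [simp]: "act3 c d (Poly_Mapping.single (p, q, s) k) = Poly_Mapping.single (gmul c p, q, gmul s d) k"
  by (simp add: act3_def)

lemma act3_add: "act3 c d (X + Y) = act3 c d X + act3 c d Y"
  by (simp add: act3_def kmap_add)
lemma act3_diff: "act3 c d (X - Y) = act3 c d X - act3 c d Y"
  by (simp add: act3_def kmap_diff)
lemma act3_smult: "act3 c d (smult k X) = smult k (act3 c d X)"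
  by (simp add: act3_def kmap_smult)

lemma Rw_deriv:
  assumes "reduced a" "reduced b" "reduced c" "reduced d"
  shows "Rw a b (gmul c d) = act3 c [] (Rw a b d) + act3 [] d (Rw a b c :: _ \<Rightarrow>\<^sub>0 'k::field)"
  unfolding Rw_def act3_smult smult_add_right[symmetric]
  apply (rule arg_cong[where f = "smult _"])
  using assms by (simp add: act3_add act3_diff gmul_assoc)

definition Tw :: "gword \<Rightarrow> gword \<Rightarrow> gword \<Rightarrow> (gword \<times> gword \<times> gword \<Rightarrow>\<^sub>0 'k::field)" where
  "Tw a b c = lin (BLk a) (Bw b c) + tau (lin (BLk b) (Bw c a)) + tau (tau (lin (BLk c) (Bw a b))) - Rw a b c"

lemma E2_eq: "E2 a b c d = - (E1 a b c d :: _ \<Rightarrow>\<^sub>0 'k::field)"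
  using E_cancel[of a b c d] by (simp add: eq_neg_iff_add_eq_0 add.commute)

lemma Tw_deriv:
  assumes "reduced a" "reduced b" "reduced c" "reduced d"
  shows "Tw a b (gmul c d) = act3 [] d (Tw a b c) + act3 c [] (Tw a b d :: _ \<Rightarrow>\<^sub>0 'k::field)"
proof -
  have "(Tw a b (gmul c d) :: _ \<Rightarrow>\<^sub>0 'k) =
     (act3 [] d (lin (BLk a) (Bw b c)) + act3 c [] (lin (BLk a) (Bw b d)) + E1 a b c d)
     + (act3 [] d (tau (lin (BLk b) (Bw c a))) + act3 c [] (tau (lin (BLk b) (Bw d a))) + E2 a b c d)
     + (act3 [] d (tau (tau (lin (BLk c) (Bw a b)))) + act3 c [] (tau (tau (lin (BLk d) (Bw a b)))))
     - (act3 c [] (Rw a b d) + act3 [] d (Rw a b c))"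
    unfolding Tw_def term1 term2 term3 Rw_deriv[OF assms] ..
  also have "\<dots> = act3 [] d (Tw a b c) + act3 c [] (Tw a b d)"
    unfolding Tw_def E2_eq act3_add act3_diff by (simp add: algebra_simps)
  finally show ?thesis .
qed

lemma tau_diff: "tau (X - Y) = tau X - (tau Y :: _ \<Rightarrow>\<^sub>0 'k::field)"
  by (simp add: tau_kmap kmap_diff)

lemma tau3 [simp]: "tau (tau (tau X)) = (X :: _ \<Rightarrow>\<^sub>0 'k::field)"
  unfolding tau_kmap kmap_kmap by (rule kmap_id) (simp add: case_prod_beta)

lemma tau_single [simp]: "tau (Poly_Mapping.single (p, q, s) k) = Poly_Mapping.single (s, p, q) (k::'k::field)"
  by (simp add: tau_kmap)

lemma tau_smult: "tau (smult k X) = smult k (tau X :: _ \<Rightarrow>\<^sub>0 'k::field)"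
  by (simp add: tau_kmap kmap_smult)

lemma Rw_cyc: "Rw c a b = tau (Rw a b c :: _ \<Rightarrow>\<^sub>0 'k::field)"
  unfolding Rw_def tau_smult
  by (rule arg_cong[where f = "smult _"]) (simp add: tau_add tau_diff algebra_simps)

lemma Tw_cyc: "Tw c a b = tau (Tw a b c :: _ \<Rightarrow>\<^sub>0 'k::field)"
  unfolding Tw_def tau_add tau_diff tau3 Rw_cyc[of c a b] by (simp add: algebra_simps)

definition rk3 :: "(gword \<times> gword \<times> gword \<Rightarrow>\<^sub>0 'k::field) \<Rightarrow> bool" where
  "rk3 X \<longleftrightarrow> (\<forall>k\<in>Poly_Mapping.keys X. reduced (fst k) \<and> reduced (fst (snd k)) \<and> reduced (snd (snd k)))"

lemma Tw_Nil: "reduced a \<Longrightarrow> reduced b \<Longrightarrow> Tw a b [] = (0 :: _ \<Rightarrow>\<^sub>0 'k::field)"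
proof -
  assume r: "reduced a" "reduced b"
  have "(BLk [] :: _ \<Rightarrow> _ \<Rightarrow>\<^sub>0 'k) = (\<lambda>k. 0)"
    by (rule ext) (simp add: BLk_def)
  then show ?thesis
    unfolding Tw_def Rw_def using r by (simp add: tau_kmap)
qed

lemma act3_inv:
  assumes "rk3 X"
  shows "act3 [] [linv l] (act3 [] [l] X) = (X :: _ \<Rightarrow>\<^sub>0 'k::field)"
  unfolding act3_def kmap_kmap
proof (rule kmap_id)
  fix k assume "k \<in> Poly_Mapping.keys X"
  then have r: "reduced (fst k)" "reduced (fst (snd k))" "reduced (snd (snd k))"
    using assms by (auto simp: rk3_def)
  obtain p q s where k: "k = (p, q, s)" by (cases k)
  have "gmul (gmul s [l]) [linv l] = s"
    using reduce_cancel[of s l "[]"] r k by (simp add: gmul_def reduce_app_left)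
  then show "(case case k of (p, q, s) \<Rightarrow> (gmul [] p, q, gmul s [l]) of
          (p, q, s) \<Rightarrow> (gmul [] p, q, gmul s [linv l])) = k"
    using r k by simp
qed

lemma rk3_lin: "(\<And>k. k \<in> Poly_Mapping.keys X \<Longrightarrow> rk3 (F k)) \<Longrightarrow> rk3 (lin F X)"
  unfolding rk3_def using keys_lin[of F X] by blast

lemma rk3_kmap: "(\<And>k. k \<in> Poly_Mapping.keys X \<Longrightarrow> reduced (fst (f k)) \<and> reduced (fst (snd (f k))) \<and> reduced (snd (snd (f k)))) \<Longrightarrow> rk3 (kmap f X)"
  unfolding rk3_def using keys_kmap[of f X] by blast

lemma rk3_add: "rk3 X \<Longrightarrow> rk3 Y \<Longrightarrow> rk3 (X + Y)"
  unfolding rk3_def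
proof
  fix k assume "\<forall>k\<in>Poly_Mapping.keys X. reduced (fst k) \<and> reduced (fst (snd k)) \<and> reduced (snd (snd k))"
    "\<forall>k\<in>Poly_Mapping.keys Y. reduced (fst k) \<and> reduced (fst (snd k)) \<and> reduced (snd (snd k))"
    "k \<in> Poly_Mapping.keys (X + Y)"
  moreover have "Poly_Mapping.keys (X + Y) \<subseteq> Poly_Mapping.keys X \<union> Poly_Mapping.keys Y" by (rule keys_add)
  ultimately show "reduced (fst k) \<and> reduced (fst (snd k)) \<and> reduced (snd (snd k))" by blast
qed
lemma rk3_uminus: "rk3 X \<Longrightarrow> rk3 (- X)"
  unfolding rk3_def by (simp add: in_keys_iff)
lemma rk3_diff: "rk3 X \<Longrightarrow> rk3 Y \<Longrightarrow> rk3 (X - Y)"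
  using rk3_add[of X "- Y"] rk3_uminus[of Y] by simp
lemma rk3_smult: "rk3 X \<Longrightarrow> rk3 (smult k X)"
  unfolding rk3_def by (simp add: in_keys_iff)
lemma rk3_single: "reduced p \<Longrightarrow> reduced q \<Longrightarrow> reduced s \<Longrightarrow> rk3 (Poly_Mapping.single (p, q, s) (c::'k::field))"
  by (simp add: rk3_def)
lemma rk3_tau: "rk3 X \<Longrightarrow> rk3 (tau X)"
  unfolding tau_kmap by (rule rk3_kmap) (auto simp: rk3_def case_prod_beta)

lemma rk3_BLk: "reduced (snd k) \<Longrightarrow> rk3 (BLk a k)"
  unfolding BLk_def
  by (rule rk3_kmap) (use rk2_Bw[of a "fst k"] in \<open>auto simp: rk2_def case_prod_beta\<close>)

lemma rk3_linBLk: "rk3 (lin (BLk a) (Bw b c))"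
  by (rule rk3_lin, rule rk3_BLk) (use rk2_Bw[of b c] in \<open>auto simp: rk2_def\<close>)

lemma rk3_Rw: "reduced a \<Longrightarrow> reduced b \<Longrightarrow> reduced c \<Longrightarrow> rk3 (Rw a b c)"
  unfolding Rw_def
  by (intro rk3_smult rk3_add rk3_diff rk3_single) simp_all

lemma rk3_Tw: "reduced a \<Longrightarrow> reduced b \<Longrightarrow> reduced c \<Longrightarrow> rk3 (Tw a b c)"
  unfolding Tw_def
  by (intro rk3_add rk3_diff rk3_tau rk3_linBLk rk3_Rw)

lemma Tw_ext3:
  assumes ra: "reduced a" and rb: "reduced b" and pos: "\<And>y. Tw a b [(y, True)] = (0 :: _ \<Rightarrow>\<^sub>0 'k::field)"
    and rw: "reduced w"
  shows "Tw a b w = (0 :: _ \<Rightarrow>\<^sub>0 'k)"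
proof -
  have neg: "Tw a b [(y, False)] = (0 :: _ \<Rightarrow>\<^sub>0 'k)" for y
  proof -
    have "(0 :: _ \<Rightarrow>\<^sub>0 'k) = Tw a b (gmul [(y, False)] [(y, True)])"
      using Tw_Nil[OF ra rb, where 'k='k] reduce_pair_cancel(1)[of "(y, False)"] by (simp add: gmul_def linv_def)
    also have "\<dots> = act3 [] [(y, True)] (Tw a b [(y, False)])"
      using Tw_deriv[OF ra rb, of "[(y, False)]" "[(y, True)]", where 'k='k] pos[of y] by (simp add: act3_def)
    finally have "act3 [] [(y, False)] (act3 [] [(y, True)] (Tw a b [(y, False)])) = (0 :: _ \<Rightarrow>\<^sub>0 'k)"
      by (simp add: act3_def)
    moreover have "act3 [] [linv (y, True)] (act3 [] [(y, True)] (Tw a b [(y, False)])) = (Tw a b [(y, False)] :: _ \<Rightarrow>\<^sub>0 'k)"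
      by (rule act3_inv) (rule rk3_Tw[OF ra rb], simp)
    ultimately show ?thesis by (simp add: linv_def)
  qed
  have letter: "Tw a b [l] = (0 :: _ \<Rightarrow>\<^sub>0 'k)" for l
  proof -
    obtain y t where l: "l = (y, t)" by (cases l)
    show ?thesis using pos neg unfolding l by (cases t) auto
  qed
  show ?thesis
    using rw
  proof (induct w)
    case Nil then show ?case using Tw_Nil[OF ra rb] by simp
  next
    case (Cons l w)
    have rw': "reduced w" using Cons.prems by (rule reduced_Cons_D)
    have "(Tw a b (l # w) :: _ \<Rightarrow>\<^sub>0 'k) = Tw a b (gmul [l] w)"
      using Cons.prems by (simp add: gmul_Cons_red)
    also have "\<dots> = act3 [] w (Tw a b [l]) + act3 [l] [] (Tw a b w)"
      by (rule Tw_deriv[OF ra rb]) (simp_all add: rw')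
    finally show ?case using letter Cons.hyps[OF rw'] by (simp add: act3_def)
  qed
qed

lemma Tw_zero:
  assumes pos: "\<And>x y z. Tw [(x, True)] [(y, True)] [(z, True)] = (0 :: _ \<Rightarrow>\<^sub>0 'k::field)"
    and r: "reduced a" "reduced b" "reduced c"
  shows "Tw a b c = (0 :: _ \<Rightarrow>\<^sub>0 'k)"
proof -
  have s1: "Tw [(x, True)] [(y, True)] w = (0 :: _ \<Rightarrow>\<^sub>0 'k)" if "reduced w" for x y w
    by (rule Tw_ext3) (simp_all add: pos that)
  have s2: "Tw [(x, True)] v w = (0 :: _ \<Rightarrow>\<^sub>0 'k)" if "reduced v" "reduced w" for x v w
  proof -
    have "Tw w [(x, True)] v = (0 :: _ \<Rightarrow>\<^sub>0 'k)"
    proof (rule Tw_ext3)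
      fix y
      show "Tw w [(x, True)] [(y, True)] = (0 :: _ \<Rightarrow>\<^sub>0 'k)"
        using Tw_cyc[of w "[(x, True)]" "[(y, True)]", where 'k='k] s1[OF that(2), of x y] by (simp add: tau_kmap)
    qed (simp_all add: that)
    then have "tau (Tw [(x, True)] v w) = (0 :: _ \<Rightarrow>\<^sub>0 'k)"
      using Tw_cyc[of w "[(x, True)]" v, where 'k='k] by simp
    then have "tau (tau (tau (Tw [(x, True)] v w))) = (0 :: _ \<Rightarrow>\<^sub>0 'k)"
      by (simp add: tau_kmap)
    then show ?thesis by simp
  qed
  have "Tw b c a = (0 :: _ \<Rightarrow>\<^sub>0 'k)"
  proof (rule Tw_ext3)
    fix y
    have "Tw c [(y, True)] b = (0 :: _ \<Rightarrow>\<^sub>0 'k)"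
      using Tw_cyc[of c "[(y, True)]" b, where 'k='k] s2[of b c y] r by (simp add: tau_kmap)
    then show "Tw b c [(y, True)] = (0 :: _ \<Rightarrow>\<^sub>0 'k)"
      using Tw_cyc[of b c "[(y, True)]", where 'k='k] by (simp add: tau_kmap)
  qed (simp_all add: r)
  then show ?thesis
    using Tw_cyc[of a b c, where 'k='k] by (simp add: tau_kmap)
qed

lemma gmul_pos: "\<forall>l\<in>set u. snd l \<Longrightarrow> \<forall>l\<in>set v. snd l \<Longrightarrow> gmul u v = u @ v"
  unfolding gmul_def by (rule reduce_id, rule positive_reduced) auto

lemma Bl_pos [simp]: "Bl (pos x) (pos y) = P x y"
  by (simp add: Bl_def ew_def sg_def act_id)

lemma Bw_single1: "Bw [l] w = D l w"
  by (simp add: act_id del: D.simps)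

lemma act_single [simp]: "act a b c d (Poly_Mapping.single (p, q) k) =
    Poly_Mapping.single (gmul a (gmul p b), gmul c (gmul q d)) (k::'k::field)"
  by (simp add: act_def)

lemma BLk_single: "BLk a (p, q) = kmap (\<lambda>(x, y). (x, y, q)) (Bw a p)"
  by (simp add: BLk_def)

lemma kmap_act: "kmap f (act a b c d X) = kmap (\<lambda>(p, q). f (gmul a (gmul p b), gmul c (gmul q d))) X"
  by (simp add: act_def kmap_kmap case_prod_unfold)

lemmas lin_rules = lin_add lin_diff lin_smult lin_single lin_uminus
lemmas kmap_rules = kmap_add kmap_diff kmap_smult kmap_single kmap_uminus
lemmas tau_rules = tau_add tau_diff tau_smult tau_single

lemma single_neg: "Poly_Mapping.single k (- c) = - Poly_Mapping.single k (c::'k::field)"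
  by (simp add: single_uminus)

abbreviation Qf :: "gen \<Rightarrow> gen \<Rightarrow> 'k::field \<Rightarrow> (gword \<times> gword \<Rightarrow>\<^sub>0 'k)" where
  "Qf x y f \<equiv> Poly_Mapping.single ([pos y, pos x], []) 1 + Poly_Mapping.single ([], [pos x, pos y]) 1
      - Poly_Mapping.single ([pos x], [pos y]) 1 + Poly_Mapping.single ([pos y], [pos x]) f"

lemma blt_irrefl: "blt x y \<Longrightarrow> x \<noteq> y"
  by (auto simp: blt_def)
lemma blt_bk: "blt x y \<Longrightarrow> bk x \<noteq> bk y"
  by (auto simp: blt_def)
lemma blt_asym: "blt x y \<Longrightarrow> \<not> blt y x"
  by (auto simp: blt_def)

lemma P_eq: "P x x = smult (sgn x / 2) (Poly_Mapping.single ([pos x, pos x], []) 1 - Poly_Mapping.single ([], [pos x, pos x]) 1)"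
  by (simp add: P_def)
lemma P_lt: "blt x y \<Longrightarrow> P x y = smult (1/2) (Qf x y (-1))"
  using blt_irrefl[of x y] blt_bk[of x y] by (simp add: P_def eps_def phi_def)
lemma P_gt: "blt y x \<Longrightarrow> P x y = smult (-1/2) (Qf x y (-1))"
  using blt_irrefl[of y x] blt_bk[of y x] blt_asym[of y x] by (auto simp: P_def eps_def phi_def)
lemma P_ab: "isA x \<Longrightarrow> isB y \<Longrightarrow> bk x = bk y \<Longrightarrow> P x y = smult (1/2) (Qf x y 1)"
  by (cases x; cases y) (auto simp: P_def eps_def phi_def)
lemma P_ba: "isB x \<Longrightarrow> isA y \<Longrightarrow> bk x = bk y \<Longrightarrow> P x y = smult (-1/2) (Qf x y 1)"
  by (cases x; cases y) (auto simp: P_def eps_def phi_def)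
lemma sgn_nB: "\<not> isB x \<Longrightarrow> sgn x = 1"
  by (simp add: sgn_def)
lemma sgn_B: "isB x \<Longrightarrow> sgn x = -1"
  by (simp add: sgn_def)

lemma tau_uminus: "tau (- X) = - tau (X :: _ \<Rightarrow>\<^sub>0 'k::field)"
  by (simp add: tau_kmap kmap_uminus)

lemmas Tsimps = tau_uminus act_uminus smult_uminus_right Bw_single1 BLk_single lin_rules kmap_rules tau_rules gmul_pos act_add act_diff act_smult
      smult_add_right smult_diff_right act_id P_eq P_lt P_gt P_ab P_ba sgn_nB sgn_B

lemma T_xxx:
  assumes "\<not> isB x"
  shows "Tw [pos x] [pos x] [pos x] = (0 :: _ \<Rightarrow>\<^sub>0 'k::field_char_0)"
  using assms unfolding Tw_def Rw_def by (simp add: Tsimps)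

lemma T_1:
  assumes "blt x y" "blt y z" "blt x z"
  shows "Tw [pos x] [pos y] [pos z] = (0 :: _ \<Rightarrow>\<^sub>0 'k::field_char_0)"
  using assms unfolding Tw_def Rw_def by (simp add: Tsimps single_neg algebra_simps)

datatype rc = EQn | EQb | AB | BA | LT | GT

definition rel :: "gen \<Rightarrow> gen \<Rightarrow> rc" where
  "rel u v = (if u = v then (if isB u then EQb else EQn) else if bk u = bk v then (if isA u then AB else BA)
     else if blt u v then LT else GT)"

lemma AB_cases: "bk u = bk v \<Longrightarrow> u \<noteq> v \<Longrightarrow> (isA u \<and> isB v) \<or> (isB u \<and> isA v)"
  by (cases u; cases v) auto

lemma isA_nB: "isA u \<Longrightarrow> \<not> isB u"
  by (cases u) auto

lemma AB_neq: "isA u \<Longrightarrow> isB v \<Longrightarrow> u \<noteq> v"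
  by (cases u; cases v) auto

lemma blt_total: "bk u \<noteq> bk v \<Longrightarrow> blt u v \<or> blt v u"
  by (auto simp: blt_def prod_eq_iff)

lemma rel_iffs:
  "rel u v = EQn \<longleftrightarrow> u = v \<and> \<not> isB u"
  "rel u v = EQb \<longleftrightarrow> u = v \<and> isB u"
  "rel u v = AB \<longleftrightarrow> isA u \<and> isB v \<and> bk u = bk v"
  "rel u v = BA \<longleftrightarrow> isB u \<and> isA v \<and> bk u = bk v"
  "rel u v = LT \<longleftrightarrow> blt u v"
  "rel u v = GT \<longleftrightarrow> blt v u"
  using AB_cases[of u v] AB_neq[of u v] AB_neq[of v u] blt_total[of u v] blt_bk[of u v] blt_bk[of v u]
    blt_asym[of u v] blt_irrefl[of u v] isA_nB[of u] isA_nB[of v]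
  by (auto simp: rel_def)

lemma Tpat_0:
  assumes "rel x y = AB" "rel y z = BA" "rel z x = EQn"
  shows "Tw [pos x] [pos y] [pos z] = (0 :: _ \<Rightarrow>\<^sub>0 'k::field_char_0)"
  apply (insert assms[unfolded rel_iffs])
  apply (elim conjE)?
  apply clarify?
  unfolding Tw_def Rw_def
  apply (simp add: Tsimps)
  apply (simp add: single_neg algebra_simps)?
  done

lemma Tpat_1:
  assumes "rel x y = AB" "rel y z = EQb" "rel z x = BA"
  shows "Tw [pos x] [pos y] [pos z] = (0 :: _ \<Rightarrow>\<^sub>0 'k::field_char_0)"
  apply (insert assms[unfolded rel_iffs])
  apply (elim conjE)?
  apply clarify?
  unfolding Tw_def Rw_def
  apply (simp add: Tsimps)
  apply (simp add: single_neg algebra_simps)?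
  done

lemma Tpat_2:
  assumes "rel x y = AB" "rel y z = GT" "rel z x = LT"
  shows "Tw [pos x] [pos y] [pos z] = (0 :: _ \<Rightarrow>\<^sub>0 'k::field_char_0)"
  apply (insert assms[unfolded rel_iffs])
  apply (elim conjE)?
  apply clarify?
  unfolding Tw_def Rw_def
  apply (simp add: Tsimps)
  apply (simp add: single_neg algebra_simps)?
  done

lemma Tpat_3:
  assumes "rel x y = AB" "rel y z = LT" "rel z x = GT"
  shows "Tw [pos x] [pos y] [pos z] = (0 :: _ \<Rightarrow>\<^sub>0 'k::field_char_0)"
  apply (insert assms[unfolded rel_iffs])
  apply (elim conjE)?
  apply clarify?
  unfolding Tw_def Rw_def
  apply (simp add: Tsimps)
  apply (simp add: single_neg algebra_simps)?
  done

lemma Tpat_4: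
  assumes "rel x y = BA" "rel y z = AB" "rel z x = EQb"
  shows "Tw [pos x] [pos y] [pos z] = (0 :: _ \<Rightarrow>\<^sub>0 'k::field_char_0)"
  apply (insert assms[unfolded rel_iffs])
  apply (elim conjE)?
  apply clarify?
  unfolding Tw_def Rw_def
  apply (simp add: Tsimps)
  apply (simp add: single_neg algebra_simps)?
  done

lemma Tpat_5:
  assumes "rel x y = BA" "rel y z = EQn" "rel z x = AB"
  shows "Tw [pos x] [pos y] [pos z] = (0 :: _ \<Rightarrow>\<^sub>0 'k::field_char_0)"
  apply (insert assms[unfolded rel_iffs])
  apply (elim conjE)?
  apply clarify?
  unfolding Tw_def Rw_def
  apply (simp add: Tsimps)
  apply (simp add: single_neg algebra_simps)?
  done

lemma Tpat_6:
  assumes "rel x y = BA" "rel y z = GT" "rel z x = LT"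
  shows "Tw [pos x] [pos y] [pos z] = (0 :: _ \<Rightarrow>\<^sub>0 'k::field_char_0)"
  apply (insert assms[unfolded rel_iffs])
  apply (elim conjE)?
  apply clarify?
  unfolding Tw_def Rw_def
  apply (simp add: Tsimps)
  apply (simp add: single_neg algebra_simps)?
  done

lemma Tpat_7:
  assumes "rel x y = BA" "rel y z = LT" "rel z x = GT"
  shows "Tw [pos x] [pos y] [pos z] = (0 :: _ \<Rightarrow>\<^sub>0 'k::field_char_0)"
  apply (insert assms[unfolded rel_iffs])
  apply (elim conjE)?
  apply clarify?
  unfolding Tw_def Rw_def
  apply (simp add: Tsimps)
  apply (simp add: single_neg algebra_simps)?
  done

lemma Tpat_8:
  assumes "rel x y = EQb" "rel y z = BA" "rel z x = AB"
  shows "Tw [pos x] [pos y] [pos z] = (0 :: _ \<Rightarrow>\<^sub>0 'k::field_char_0)"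
  apply (insert assms[unfolded rel_iffs])
  apply (elim conjE)?
  apply clarify?
  unfolding Tw_def Rw_def
  apply (simp add: Tsimps)
  apply (simp add: single_neg algebra_simps)?
  done

lemma Tpat_9:
  assumes "rel x y = EQb" "rel y z = EQb" "rel z x = EQb"
  shows "Tw [pos x] [pos y] [pos z] = (0 :: _ \<Rightarrow>\<^sub>0 'k::field_char_0)"
  apply (insert assms[unfolded rel_iffs])
  apply (elim conjE)?
  apply clarify?
  unfolding Tw_def Rw_def
  apply (simp add: Tsimps)
  apply (simp add: single_neg algebra_simps)?
  done

lemma Tpat_10:
  assumes "rel x y = EQb" "rel y z = GT" "rel z x = LT"
  shows "Tw [pos x] [pos y] [pos z] = (0 :: _ \<Rightarrow>\<^sub>0 'k::field_char_0)"
  apply (insert assms[unfolded rel_iffs])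
  apply (elim conjE)?
  apply clarify?
  unfolding Tw_def Rw_def
  apply (simp add: Tsimps)
  apply (simp add: single_neg algebra_simps)?
  done

lemma Tpat_11:
  assumes "rel x y = EQb" "rel y z = LT" "rel z x = GT"
  shows "Tw [pos x] [pos y] [pos z] = (0 :: _ \<Rightarrow>\<^sub>0 'k::field_char_0)"
  apply (insert assms[unfolded rel_iffs])
  apply (elim conjE)?
  apply clarify?
  unfolding Tw_def Rw_def
  apply (simp add: Tsimps)
  apply (simp add: single_neg algebra_simps)?
  done

lemma Tpat_12:
  assumes "rel x y = EQn" "rel y z = AB" "rel z x = BA"
  shows "Tw [pos x] [pos y] [pos z] = (0 :: _ \<Rightarrow>\<^sub>0 'k::field_char_0)"
  apply (insert assms[unfolded rel_iffs])
  apply (elim conjE)?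
  apply clarify?
  unfolding Tw_def Rw_def
  apply (simp add: Tsimps)
  apply (simp add: single_neg algebra_simps)?
  done

lemma Tpat_13:
  assumes "rel x y = EQn" "rel y z = EQn" "rel z x = EQn"
  shows "Tw [pos x] [pos y] [pos z] = (0 :: _ \<Rightarrow>\<^sub>0 'k::field_char_0)"
  apply (insert assms[unfolded rel_iffs])
  apply (elim conjE)?
  apply clarify?
  unfolding Tw_def Rw_def
  apply (simp add: Tsimps)
  apply (simp add: single_neg algebra_simps)?
  done

lemma Tpat_14:
  assumes "rel x y = EQn" "rel y z = GT" "rel z x = LT"
  shows "Tw [pos x] [pos y] [pos z] = (0 :: _ \<Rightarrow>\<^sub>0 'k::field_char_0)"
  apply (insert assms[unfolded rel_iffs])
  apply (elim conjE)?
  apply clarify?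
  unfolding Tw_def Rw_def
  apply (simp add: Tsimps)
  apply (simp add: single_neg algebra_simps)?
  done

lemma Tpat_15:
  assumes "rel x y = EQn" "rel y z = LT" "rel z x = GT"
  shows "Tw [pos x] [pos y] [pos z] = (0 :: _ \<Rightarrow>\<^sub>0 'k::field_char_0)"
  apply (insert assms[unfolded rel_iffs])
  apply (elim conjE)?
  apply clarify?
  unfolding Tw_def Rw_def
  apply (simp add: Tsimps)
  apply (simp add: single_neg algebra_simps)?
  done

lemma Tpat_16:
  assumes "rel x y = GT" "rel y z = AB" "rel z x = LT"
  shows "Tw [pos x] [pos y] [pos z] = (0 :: _ \<Rightarrow>\<^sub>0 'k::field_char_0)"
  apply (insert assms[unfolded rel_iffs])
  apply (elim conjE)?
  apply clarify?
  unfolding Tw_def Rw_def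
  apply (simp add: Tsimps)
  apply (simp add: single_neg algebra_simps)?
  done

lemma Tpat_17:
  assumes "rel x y = GT" "rel y z = BA" "rel z x = LT"
  shows "Tw [pos x] [pos y] [pos z] = (0 :: _ \<Rightarrow>\<^sub>0 'k::field_char_0)"
  apply (insert assms[unfolded rel_iffs])
  apply (elim conjE)?
  apply clarify?
  unfolding Tw_def Rw_def
  apply (simp add: Tsimps)
  apply (simp add: single_neg algebra_simps)?
  done

lemma Tpat_18:
  assumes "rel x y = GT" "rel y z = EQb" "rel z x = LT"
  shows "Tw [pos x] [pos y] [pos z] = (0 :: _ \<Rightarrow>\<^sub>0 'k::field_char_0)"
  apply (insert assms[unfolded rel_iffs])
  apply (elim conjE)?
  apply clarify?
  unfolding Tw_def Rw_def
  apply (simp add: Tsimps)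
  apply (simp add: single_neg algebra_simps)?
  done

lemma Tpat_19:
  assumes "rel x y = GT" "rel y z = EQn" "rel z x = LT"
  shows "Tw [pos x] [pos y] [pos z] = (0 :: _ \<Rightarrow>\<^sub>0 'k::field_char_0)"
  apply (insert assms[unfolded rel_iffs])
  apply (elim conjE)?
  apply clarify?
  unfolding Tw_def Rw_def
  apply (simp add: Tsimps)
  apply (simp add: single_neg algebra_simps)?
  done

lemma Tpat_20:
  assumes "rel x y = GT" "rel y z = GT" "rel z x = LT"
  shows "Tw [pos x] [pos y] [pos z] = (0 :: _ \<Rightarrow>\<^sub>0 'k::field_char_0)"
  apply (insert assms[unfolded rel_iffs])
  apply (elim conjE)?
  apply clarify?
  unfolding Tw_def Rw_def
  apply (simp add: Tsimps)
  apply (simp add: single_neg algebra_simps)?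
  done

lemma Tpat_21:
  assumes "rel x y = GT" "rel y z = LT" "rel z x = AB"
  shows "Tw [pos x] [pos y] [pos z] = (0 :: _ \<Rightarrow>\<^sub>0 'k::field_char_0)"
  apply (insert assms[unfolded rel_iffs])
  apply (elim conjE)?
  apply clarify?
  unfolding Tw_def Rw_def
  apply (simp add: Tsimps)
  apply (simp add: single_neg algebra_simps)?
  done

lemma Tpat_22:
  assumes "rel x y = GT" "rel y z = LT" "rel z x = BA"
  shows "Tw [pos x] [pos y] [pos z] = (0 :: _ \<Rightarrow>\<^sub>0 'k::field_char_0)"
  apply (insert assms[unfolded rel_iffs])
  apply (elim conjE)?
  apply clarify?
  unfolding Tw_def Rw_def
  apply (simp add: Tsimps)
  apply (simp add: single_neg algebra_simps)?
  done

lemma Tpat_23: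
  assumes "rel x y = GT" "rel y z = LT" "rel z x = EQb"
  shows "Tw [pos x] [pos y] [pos z] = (0 :: _ \<Rightarrow>\<^sub>0 'k::field_char_0)"
  apply (insert assms[unfolded rel_iffs])
  apply (elim conjE)?
  apply clarify?
  unfolding Tw_def Rw_def
  apply (simp add: Tsimps)
  apply (simp add: single_neg algebra_simps)?
  done

lemma Tpat_24:
  assumes "rel x y = GT" "rel y z = LT" "rel z x = EQn"
  shows "Tw [pos x] [pos y] [pos z] = (0 :: _ \<Rightarrow>\<^sub>0 'k::field_char_0)"
  apply (insert assms[unfolded rel_iffs])
  apply (elim conjE)?
  apply clarify?
  unfolding Tw_def Rw_def
  apply (simp add: Tsimps)
  apply (simp add: single_neg algebra_simps)?
  done

lemma Tpat_25:
  assumes "rel x y = GT" "rel y z = LT" "rel z x = GT"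
  shows "Tw [pos x] [pos y] [pos z] = (0 :: _ \<Rightarrow>\<^sub>0 'k::field_char_0)"
  apply (insert assms[unfolded rel_iffs])
  apply (elim conjE)?
  apply clarify?
  unfolding Tw_def Rw_def
  apply (simp add: Tsimps)
  apply (simp add: single_neg algebra_simps)?
  done

lemma Tpat_26:
  assumes "rel x y = GT" "rel y z = LT" "rel z x = LT"
  shows "Tw [pos x] [pos y] [pos z] = (0 :: _ \<Rightarrow>\<^sub>0 'k::field_char_0)"
  apply (insert assms[unfolded rel_iffs])
  apply (elim conjE)?
  apply clarify?
  unfolding Tw_def Rw_def
  apply (simp add: Tsimps)
  apply (simp add: single_neg algebra_simps)?
  done

lemma Tpat_27:
  assumes "rel x y = LT" "rel y z = AB" "rel z x = GT"
  shows "Tw [pos x] [pos y] [pos z] = (0 :: _ \<Rightarrow>\<^sub>0 'k::field_char_0)"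
  apply (insert assms[unfolded rel_iffs])
  apply (elim conjE)?
  apply clarify?
  unfolding Tw_def Rw_def
  apply (simp add: Tsimps)
  apply (simp add: single_neg algebra_simps)?
  done

lemma Tpat_28:
  assumes "rel x y = LT" "rel y z = BA" "rel z x = GT"
  shows "Tw [pos x] [pos y] [pos z] = (0 :: _ \<Rightarrow>\<^sub>0 'k::field_char_0)"
  apply (insert assms[unfolded rel_iffs])
  apply (elim conjE)?
  apply clarify?
  unfolding Tw_def Rw_def
  apply (simp add: Tsimps)
  apply (simp add: single_neg algebra_simps)?
  done

lemma Tpat_29:
  assumes "rel x y = LT" "rel y z = EQb" "rel z x = GT"
  shows "Tw [pos x] [pos y] [pos z] = (0 :: _ \<Rightarrow>\<^sub>0 'k::field_char_0)"
  apply (insert assms[unfolded rel_iffs])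
  apply (elim conjE)?
  apply clarify?
  unfolding Tw_def Rw_def
  apply (simp add: Tsimps)
  apply (simp add: single_neg algebra_simps)?
  done

lemma Tpat_30:
  assumes "rel x y = LT" "rel y z = EQn" "rel z x = GT"
  shows "Tw [pos x] [pos y] [pos z] = (0 :: _ \<Rightarrow>\<^sub>0 'k::field_char_0)"
  apply (insert assms[unfolded rel_iffs])
  apply (elim conjE)?
  apply clarify?
  unfolding Tw_def Rw_def
  apply (simp add: Tsimps)
  apply (simp add: single_neg algebra_simps)?
  done

lemma Tpat_31:
  assumes "rel x y = LT" "rel y z = GT" "rel z x = AB"
  shows "Tw [pos x] [pos y] [pos z] = (0 :: _ \<Rightarrow>\<^sub>0 'k::field_char_0)"
  apply (insert assms[unfolded rel_iffs])
  apply (elim conjE)?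
  apply clarify?
  unfolding Tw_def Rw_def
  apply (simp add: Tsimps)
  apply (simp add: single_neg algebra_simps)?
  done

lemma Tpat_32:
  assumes "rel x y = LT" "rel y z = GT" "rel z x = BA"
  shows "Tw [pos x] [pos y] [pos z] = (0 :: _ \<Rightarrow>\<^sub>0 'k::field_char_0)"
  apply (insert assms[unfolded rel_iffs])
  apply (elim conjE)?
  apply clarify?
  unfolding Tw_def Rw_def
  apply (simp add: Tsimps)
  apply (simp add: single_neg algebra_simps)?
  done

lemma Tpat_33:
  assumes "rel x y = LT" "rel y z = GT" "rel z x = EQb"
  shows "Tw [pos x] [pos y] [pos z] = (0 :: _ \<Rightarrow>\<^sub>0 'k::field_char_0)"
  apply (insert assms[unfolded rel_iffs])
  apply (elim conjE)?
  apply clarify?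
  unfolding Tw_def Rw_def
  apply (simp add: Tsimps)
  apply (simp add: single_neg algebra_simps)?
  done

lemma Tpat_34:
  assumes "rel x y = LT" "rel y z = GT" "rel z x = EQn"
  shows "Tw [pos x] [pos y] [pos z] = (0 :: _ \<Rightarrow>\<^sub>0 'k::field_char_0)"
  apply (insert assms[unfolded rel_iffs])
  apply (elim conjE)?
  apply clarify?
  unfolding Tw_def Rw_def
  apply (simp add: Tsimps)
  apply (simp add: single_neg algebra_simps)?
  done

lemma Tpat_35:
  assumes "rel x y = LT" "rel y z = GT" "rel z x = GT"
  shows "Tw [pos x] [pos y] [pos z] = (0 :: _ \<Rightarrow>\<^sub>0 'k::field_char_0)"
  apply (insert assms[unfolded rel_iffs])
  apply (elim conjE)?
  apply clarify?
  unfolding Tw_def Rw_def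
  apply (simp add: Tsimps)
  apply (simp add: single_neg algebra_simps)?
  done

lemma Tpat_36:
  assumes "rel x y = LT" "rel y z = GT" "rel z x = LT"
  shows "Tw [pos x] [pos y] [pos z] = (0 :: _ \<Rightarrow>\<^sub>0 'k::field_char_0)"
  apply (insert assms[unfolded rel_iffs])
  apply (elim conjE)?
  apply clarify?
  unfolding Tw_def Rw_def
  apply (simp add: Tsimps)
  apply (simp add: single_neg algebra_simps)?
  done

lemma Tpat_37:
  assumes "rel x y = LT" "rel y z = LT" "rel z x = GT"
  shows "Tw [pos x] [pos y] [pos z] = (0 :: _ \<Rightarrow>\<^sub>0 'k::field_char_0)"
  apply (insert assms[unfolded rel_iffs])
  apply (elim conjE)?
  apply clarify?
  unfolding Tw_def Rw_def
  apply (simp add: Tsimps)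
  apply (simp add: single_neg algebra_simps)?
  done

lemma rel_valid: "(rel x y, rel y z, rel z x) \<in> set [(AB, BA, EQn), (AB, EQb, BA), (AB, GT, LT), (AB, LT, GT), (BA, AB, EQb), (BA, EQn, AB), (BA, GT, LT), (BA, LT, GT), (EQb, BA, AB), (EQb, EQb, EQb), (EQb, GT, LT), (EQb, LT, GT), (EQn, AB, BA), (EQn, EQn, EQn), (EQn, GT, LT), (EQn, LT, GT), (GT, AB, LT), (GT, BA, LT), (GT, EQb, LT), (GT, EQn, LT), (GT, GT, LT), (GT, LT, AB), (GT, LT, BA), (GT, LT, EQb), (GT, LT, EQn), (GT, LT, GT), (GT, LT, LT), (LT, AB, GT), (LT, BA, GT), (LT, EQb, GT), (LT, EQn, GT), (LT, GT, AB), (LT, GT, BA), (LT, GT, EQb), (LT, GT, EQn), (LT, GT, GT), (LT, GT, LT), (LT, LT, GT)]"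
  by (cases x; cases y; cases z) (auto simp: rel_def blt_def)

lemma T_letters: "Tw [pos x] [pos y] [pos z] = (0 :: _ \<Rightarrow>\<^sub>0 'k::field_char_0)"
  using rel_valid[of x y z] by (simp only: set_simps insert_iff empty_iff prod.inject) (elim disjE conjE; simp add: Tpat_0 Tpat_1 Tpat_2 Tpat_3 Tpat_4 Tpat_5 Tpat_6 Tpat_7 Tpat_8 Tpat_9 Tpat_10 Tpat_11 Tpat_12 Tpat_13 Tpat_14 Tpat_15 Tpat_16 Tpat_17 Tpat_18 Tpat_19 Tpat_20 Tpat_21 Tpat_22 Tpat_23 Tpat_24 Tpat_25 Tpat_26 Tpat_27 Tpat_28 Tpat_29 Tpat_30 Tpat_31 Tpat_32 Tpat_33 Tpat_34 Tpat_35 Tpat_36 Tpat_37)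

lemma lin_expand: "islin H \<Longrightarrow> H x = lin (\<lambda>u. H (gel u)) x"
  using islin_lin_comm[of H "\<lambda>u. Poly_Mapping.single u 1" x] by (simp add: lin_id gel_def)

lemma islin_bl1 [intro]: "islin (\<lambda>a. bracket_left Bk a d)"
  unfolding bracket_left_lin
  by (rule islin_lin_param) (auto simp: case_prod_beta intro!: islin_comp[OF islin_tens3_1 islin_Bk1])

lemma islin_trip1: "islin (\<lambda>a. triple_bracket Bk a b c)"
  unfolding triple_bracket_def
  by (intro islin_fadd islin_bl1 islin_comp[OF islin_tau] islin_comp[OF islin_bl2] islin_Bk2' islin_Bk1)

lemma islin_trip2: "islin (\<lambda>b. triple_bracket Bk a b c)"
  unfolding triple_bracket_def
  by (intro islin_fadd islin_bl1 islin_comp[OF islin_tau] islin_comp[OF islin_bl2] islin_Bk2' islin_Bk1)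

lemma islin_trip3: "islin (\<lambda>c. triple_bracket Bk a b c)"
  unfolding triple_bracket_def
  by (intro islin_fadd islin_bl1 islin_comp[OF islin_tau] islin_comp[OF islin_bl2] islin_Bk2' islin_Bk1)

lemma islin_const_zero: "islin (\<lambda>x. (0 :: _ \<Rightarrow>\<^sub>0 'k::field))"
  by (simp add: islin_def)

lemma islin_qp1: "islin (\<lambda>a. qprhs a b c)"
  unfolding qprhs_def
  by (intro islin_fsmult islin_fadd islin_fdiff islin_comp[OF islin_t3_1] islin_comp[OF islin_t3_2]
      islin_comp[OF islin_t3_3] islin_amul1 islin_amul2 islin_t3_1 islin_t3_2 islin_t3_3)

lemma islin_qp2: "islin (\<lambda>b. qprhs a b c)"
  unfolding qprhs_def
  by (intro islin_fsmult islin_fadd islin_fdiff islin_comp[OF islin_t3_1] islin_comp[OF islin_t3_2]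
      islin_comp[OF islin_t3_3] islin_amul1 islin_amul2 islin_t3_1 islin_t3_2 islin_t3_3)

lemma islin_qp3: "islin (\<lambda>c. qprhs a b c)"
  unfolding qprhs_def
  by (intro islin_fsmult islin_fadd islin_fdiff islin_comp[OF islin_t3_1] islin_comp[OF islin_t3_2]
      islin_comp[OF islin_t3_3] islin_amul1 islin_amul2 islin_t3_1 islin_t3_2 islin_t3_3)

definition RA :: "(gword \<Rightarrow>\<^sub>0 'k::field) set" where
  "RA = {x. \<forall>w \<in> Poly_Mapping.keys x. reduced w}"

lemma algA_RA: "algA g r \<subseteq> RA"
  by (auto simp: algA_def RA_def)

lemma qp_words: "reduced u \<Longrightarrow> reduced v \<Longrightarrow> reduced w \<Longrightarrow>
   triple_bracket Bk (gel u) (gel v) (gel w) = (qprhs (gel u) (gel v) (gel w) :: _ \<Rightarrow>\<^sub>0 'k::field_char_0)"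
  using Tw_zero[OF T_letters, of u v w] unfolding triple_gel qprhs_gel Tw_def by simp

lemma qp_RA:
  assumes "a \<in> RA" "b \<in> RA" "c \<in> RA"
  shows "triple_bracket Bk a b c = (qprhs a b c :: _ \<Rightarrow>\<^sub>0 'k::field_char_0)"
proof -
  have ra: "reduced u" if "u \<in> Poly_Mapping.keys a" for u using assms that by (auto simp: RA_def)
  have rb: "reduced u" if "u \<in> Poly_Mapping.keys b" for u using assms that by (auto simp: RA_def)
  have rc: "reduced u" if "u \<in> Poly_Mapping.keys c" for u using assms that by (auto simp: RA_def)
  have "triple_bracket Bk a b c = lin (\<lambda>u. lin (\<lambda>v. lin (\<lambda>w. triple_bracket Bk (gel u) (gel v) (gel w)) c) b) a"
    by (subst lin_expand[OF islin_trip1], subst lin_expand[OF islin_trip2], subst lin_expand[OF islin_trip3]) (rule refl)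
  also have "\<dots> = lin (\<lambda>u. lin (\<lambda>v. lin (\<lambda>w. qprhs (gel u) (gel v) (gel w)) c) b) a"
    by (intro lin_cong) (simp add: qp_words ra rb rc)
  also have "qprhs a b c = lin (\<lambda>u. lin (\<lambda>v. lin (\<lambda>w. qprhs (gel u) (gel v) (gel w)) c) b) a"
    by (subst lin_expand[OF islin_qp1], subst lin_expand[OF islin_qp2], subst lin_expand[OF islin_qp3]) (rule refl)
  ultimately show ?thesis by simp
qed

theorem quasi_poisson_Bk: "quasi_poisson_on (algA g r) (Bk :: ('k::field_char_0) dbracket)"
  unfolding quasi_poisson_on_def
proof (intro ballI)
  fix a b c :: "gword \<Rightarrow>\<^sub>0 'k"
  assume "a \<in> algA g r" "b \<in> algA g r" "c \<in> algA g r"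
  then have "a \<in> RA" "b \<in> RA" "c \<in> RA" using algA_RA by blast+
  then show "triple_bracket Bk a b c = smult (1 / 4)
       (t3 (amul c a) b aone - t3 (amul c a) aone b - t3 c (amul a b) aone + t3 c a b -
        t3 a b c + t3 a aone (amul b c) + t3 aone (amul a b) c - t3 aone a (amul b c))"
    using qp_RA[of a b c] by (simp add: qprhs_def)
qed

definition Cr :: "gword \<Rightarrow> gen \<Rightarrow> (gword \<times> gword \<Rightarrow>\<^sub>0 'k::field)" where
  "Cr L x = smult (1/2) (Poly_Mapping.single (gmul [pos x] L, []) 1 + Poly_Mapping.single ([], gmul L [pos x]) 1
     - Poly_Mapping.single (reduce L, [pos x]) 1 - Poly_Mapping.single ([pos x], reduce L) 1)"

definition Mx :: "gword \<Rightarrow> gen \<Rightarrow> (gword \<times> gword \<Rightarrow>\<^sub>0 'k::field)" where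
  "Mx L x = smult (1/2) (Poly_Mapping.single ([pos x], reduce L) 1 - Poly_Mapping.single ([], gmul L [pos x]) 1
     + Poly_Mapping.single (gmul [pos x] L, []) 1 - Poly_Mapping.single (reduce L, [pos x]) 1)"

lemmas gsimps = gmul_def reduce_app_left reduce_app_right reduce_mid reduce_app_right2

lemma act_single_red: "act a b c d (Poly_Mapping.single (p, q) k) =
    Poly_Mapping.single (reduce (a @ p @ b), reduce (c @ q @ d)) (k::'k::field)"
  by (simp add: gsimps)

lemma F1: "act [] L2 [] [] (Cr L1 x) + act [] [] L1 [] (Cr L2 x) = (Cr (L1 @ L2) x :: _ \<Rightarrow>\<^sub>0 'k::field)"
  unfolding Cr_def
  by (simp add: act_smult act_add act_diff act_single_red reduce_app_left reduce_app_right reduce_mid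
      reduce_app_right2 gmul_def smult_add_right[symmetric] smult_diff_right[symmetric] algebra_simps)

lemma F2: "act [] Q2 [] [] (Cr Q1 x) + act [] [] Q1 [] (Mx Q2 x) = (Mx (Q1 @ Q2) x :: _ \<Rightarrow>\<^sub>0 'k::field)"
  unfolding Cr_def Mx_def
  by (simp add: act_smult act_add act_diff act_single_red reduce_app_left reduce_app_right reduce_mid
      reduce_app_right2 gmul_def smult_add_right[symmetric] smult_diff_right[symmetric] algebra_simps)

lemma F3: "act [] Q2 [] [] (Mx Q1 x) + act [] [] Q1 [] (- Cr Q2 x) = (Mx (Q1 @ Q2) x :: _ \<Rightarrow>\<^sub>0 'k::field)"
  unfolding Cr_def Mx_def
  by (simp add: act_smult act_add act_diff act_uminus act_single_red reduce_app_left reduce_app_right reduce_mid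
      reduce_app_right2 gmul_def smult_add_right[symmetric] smult_diff_right[symmetric] algebra_simps)

lemma reduce_simps: "reduce w = rev (foldl (\<lambda>s l. push l s) [] w)"
  by (simp add: reduce_def)

lemma base_before: "blt y x \<Longrightarrow> Bl (y, t) (pos x) = (Cr [(y, t)] x :: _ \<Rightarrow>\<^sub>0 'k::field)"
  using blt_irrefl[of y x]
  by (cases t) (simp_all add: Bl_def ew_def sg_def P_lt Cr_def act_smult act_add act_diff act_single_red
      reduce_simps gmul_def linv_def smult_add_right smult_diff_right single_neg algebra_simps)

lemma base_after: "blt x y \<Longrightarrow> Bl (y, t) (pos x) = - (Cr [(y, t)] x :: _ \<Rightarrow>\<^sub>0 'k::field)"
  using blt_irrefl[of x y]
  by (cases t) (simp_all add: Bl_def ew_def sg_def P_gt Cr_def act_smult act_add act_diff act_single_red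
      reduce_simps gmul_def linv_def smult_add_right smult_diff_right single_neg algebra_simps)

lemma Cr_Nil: "Cr [] x = (0 :: _ \<Rightarrow>\<^sub>0 'k::field)"
  by (simp add: Cr_def gmul_def reduce_id)

lemma Cr_list: "(\<forall>l\<in>set L. blt (fst l) x) \<Longrightarrow> Bw L [pos x] = (Cr L x :: _ \<Rightarrow>\<^sub>0 'k::field)"
proof (induct L)
  case Nil then show ?case by (simp add: Cr_Nil)
next
  case (Cons l L)
  obtain y t where l: "l = (y, t)" by (cases l)
  have "(Bw ([l] @ L) [pos x] :: _ \<Rightarrow>\<^sub>0 'k) = act [] L [] [] (Bw [l] [pos x]) + act [] [] [l] [] (Bw L [pos x])"
    by (rule Bw_app1)
  also have "\<dots> = act [] L [] [] (Cr [l] x) + act [] [] [l] [] (Cr L x)"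
    using Cons l by (simp add: Bw_single base_before)
  also have "\<dots> = Cr ([l] @ L) x" by (rule F1)
  finally show ?case by simp
qed

lemma Cl_list: "(\<forall>l\<in>set L. blt x (fst l)) \<Longrightarrow> Bw L [pos x] = - (Cr L x :: _ \<Rightarrow>\<^sub>0 'k::field)"
proof (induct L)
  case Nil then show ?case by (simp add: Cr_Nil)
next
  case (Cons l L)
  obtain y t where l: "l = (y, t)" by (cases l)
  have "(Bw ([l] @ L) [pos x] :: _ \<Rightarrow>\<^sub>0 'k) = act [] L [] [] (Bw [l] [pos x]) + act [] [] [l] [] (Bw L [pos x])"
    by (rule Bw_app1)
  also have "\<dots> = - (act [] L [] [] (Cr [l] x) + act [] [] [l] [] (Cr L x))"
    using Cons l by (simp add: Bw_single base_after act_uminus)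
  also have "\<dots> = - Cr ([l] @ L) x" by (subst F1) (rule refl)
  finally show ?case by simp
qed

definition cm :: "nat \<Rightarrow> gword" where
  "cm i = [(Al i, True), (Be i, True), (Al i, False), (Be i, False)]"

lemma cm_Al: "Bw (cm i) [pos (Al i)] = (Mx (cm i) (Al i) :: _ \<Rightarrow>\<^sub>0 'k::field)"
  unfolding cm_def Mx_def
  by (simp add: Bl_def ew_def sg_def P_eq P_ab P_ba sgn_def act_smult act_add act_diff act_uminus act_single_red
      reduce_simps gmul_def linv_def smult_add_right smult_diff_right single_neg algebra_simps)

lemma cm_Be: "Bw (cm i) [pos (Be i)] = (Mx (cm i) (Be i) :: _ \<Rightarrow>\<^sub>0 'k::field)"
  unfolding cm_def Mx_def
  by (simp add: Bl_def ew_def sg_def P_eq P_ab P_ba sgn_def act_smult act_add act_diff act_uminus act_single_red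
      reduce_simps gmul_def linv_def smult_add_right smult_diff_right single_neg algebra_simps)

lemma ga_Ga: "Bw [pos (Ga k)] [pos (Ga k)] = (Mx [pos (Ga k)] (Ga k) :: _ \<Rightarrow>\<^sub>0 'k::field)"
  unfolding Mx_def
  by (simp add: Bw_single P_eq sgn_def act_diff act_single_red reduce_simps gmul_def linv_def smult_add_right smult_diff_right single_neg algebra_simps)

definition phi_list :: "nat \<Rightarrow> nat \<Rightarrow> gword" where
  "phi_list g r = concat (map cm [1..<Suc g]) @ map (\<lambda>k. (Ga k, True)) [1..<Suc r]"

lemma phi_word_eq: "phi_word g r = reduce (phi_list g r)"
proof -
  have "map (\<lambda>i. [(Al i, True), (Be i, True), (Al i, False), (Be i, False)]) [1..<Suc g] = map cm [1..<Suc g]"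
    by (simp add: cm_def)
  then show ?thesis by (simp only: phi_word_def phi_list_def)
qed

lemma blt_AG: "blt (Al i) (Ga k)" "blt (Be i) (Ga k)"
  by (simp_all add: blt_def)

lemma set_cm: "l \<in> set (cm j) \<Longrightarrow> fst l = Al j \<or> fst l = Be j"
  by (auto simp: cm_def)

lemma upt_split3: "1 \<le> k \<Longrightarrow> k \<le> r \<Longrightarrow> [1..<Suc r] = [1..<k] @ k # [Suc k..<Suc r]"
proof -
  assume a: "1 \<le> k" "k \<le> r"
  have "[1..<Suc r] = [1..<k] @ [k..<Suc r]"
    using a upt_add_eq_append[of 1 k "Suc r - k"] by simp
  also have "[k..<Suc r] = k # [Suc k..<Suc r]" using a by (intro upt_conv_Cons) simp
  finally show ?thesis .
qed

lemma mm_letter_Ga: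
  assumes "1 \<le> k" "k \<le> r"
  shows "Bw (phi_list g r) [pos (Ga k)] = (Mx (phi_list g r) (Ga k) :: _ \<Rightarrow>\<^sub>0 'k::field)"
proof -
  define A where "A = concat (map cm [1..<Suc g]) @ map (\<lambda>k. (Ga k, True)) [1..<k]"
  define C where "C = map (\<lambda>k. (Ga k, True)) [Suc k..<Suc r]"
  have L: "phi_list g r = A @ ([pos (Ga k)] @ C)"
    unfolding A_def C_def phi_list_def using upt_split3[OF assms] by simp
  have hA: "\<forall>l\<in>set A. blt (fst l) (Ga k)"
    unfolding A_def by (auto simp: blt_def dest!: set_cm)
  have hC: "\<forall>l\<in>set C. blt (Ga k) (fst l)"
    unfolding C_def by (auto simp: blt_def)
  have "(Bw ([pos (Ga k)] @ C) [pos (Ga k)] :: _ \<Rightarrow>\<^sub>0 'k) = Mx ([pos (Ga k)] @ C) (Ga k)"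
    unfolding Bw_app1 ga_Ga Cl_list[OF hC] by (rule F3)
  then have "(Bw (A @ ([pos (Ga k)] @ C)) [pos (Ga k)] :: _ \<Rightarrow>\<^sub>0 'k) = Mx (A @ ([pos (Ga k)] @ C)) (Ga k)"
    unfolding Bw_app1[of A] Cr_list[OF hA] by (simp add: F2)
  then show ?thesis unfolding L .
qed

lemma mm_letter_AB:
  assumes "1 \<le> i" "i \<le> g" "x = Al i \<or> x = Be i"
  shows "Bw (phi_list g r) [pos x] = (Mx (phi_list g r) x :: _ \<Rightarrow>\<^sub>0 'k::field)"
proof -
  define A where "A = concat (map cm [1..<i])"
  define C where "C = concat (map cm [Suc i..<Suc g]) @ map (\<lambda>k. (Ga k, True)) [1..<Suc r]"
  have L: "phi_list g r = A @ (cm i @ C)"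
    unfolding A_def C_def phi_list_def using upt_split3[OF assms(1,2)] by simp
  have hA: "\<forall>l\<in>set A. blt (fst l) x"
    unfolding A_def using assms(3) by (auto simp: blt_def dest!: set_cm)
  have hC: "\<forall>l\<in>set C. blt x (fst l)"
    unfolding C_def using assms(3) by (auto simp: blt_def dest!: set_cm)
  have cmx: "(Bw (cm i) [pos x] :: _ \<Rightarrow>\<^sub>0 'k) = Mx (cm i) x"
    using assms(3) cm_Al cm_Be by auto
  have "(Bw (cm i @ C) [pos x] :: _ \<Rightarrow>\<^sub>0 'k) = Mx (cm i @ C) x"
    unfolding Bw_app1 cmx Cl_list[OF hC] by (rule F3)
  then have "(Bw (A @ (cm i @ C)) [pos x] :: _ \<Rightarrow>\<^sub>0 'k) = Mx (A @ (cm i @ C)) x"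
    unfolding Bw_app1[of A] Cr_list[OF hA] by (simp add: F2)
  then show ?thesis unfolding L .
qed

lemma mm_letter:
  assumes "x \<in> gens g r"
  shows "Bw (phi_word g r) [pos x] = (Mx (phi_list g r) x :: _ \<Rightarrow>\<^sub>0 'k::field)"
  using assms unfolding phi_word_eq Bw_reduce1 gens_def
  by (auto intro: mm_letter_Ga mm_letter_AB)

definition Mw :: "gword \<Rightarrow> gword \<Rightarrow> (gword \<times> gword \<Rightarrow>\<^sub>0 'k::field)" where
  "Mw F v = smult (1/2) (Poly_Mapping.single (v, F) 1 - Poly_Mapping.single ([], gmul F v) 1
     + Poly_Mapping.single (gmul v F, []) 1 - Poly_Mapping.single (F, v) 1)"

lemma mm_rhs_gel: "mm_rhs (gel F) (gel v) = (Mw F v :: _ \<Rightarrow>\<^sub>0 'k::field)"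
  by (simp add: mm_rhs_def Mw_def aone_gel)

lemma Mx_eq: "Mx L x = (Mw (reduce L) [pos x] :: _ \<Rightarrow>\<^sub>0 'k::field)"
  by (simp add: Mx_def Mw_def)

lemma Mw_deriv:
  assumes "reduced F" "reduced v" "reduced w"
  shows "Mw F (gmul v w) = act [] [] [] w (Mw F v) + act v [] [] [] (Mw F w :: _ \<Rightarrow>\<^sub>0 'k::field)"
  unfolding Mw_def act_smult smult_add_right[symmetric]
  apply (rule arg_cong[where f = "smult _"])
  using assms by (simp add: act_add act_diff gmul_assoc algebra_simps)

lemma rk2_Mw: "reduced F \<Longrightarrow> reduced v \<Longrightarrow> rk2 (Mw F v :: _ \<Rightarrow>\<^sub>0 'k::field)"
  unfolding Mw_def by (intro rk2_smult rk2_add rk2_diff rk2_single) simp_all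

definition Dm :: "gword \<Rightarrow> gword \<Rightarrow> (gword \<times> gword \<Rightarrow>\<^sub>0 'k::field)" where
  "Dm F v = Bw F v - Mw F v"

lemma Dm_deriv:
  assumes "reduced F" "reduced v" "reduced w"
  shows "Dm F (gmul v w) = act [] [] [] w (Dm F v) + act v [] [] [] (Dm F w :: _ \<Rightarrow>\<^sub>0 'k::field)"
proof -
  have "(Bw F (gmul v w) :: _ \<Rightarrow>\<^sub>0 'k) = act [] [] [] w (Bw F v) + act v [] [] [] (Bw F w)"
    by (simp add: gmul_def Bw_reduce2 Bw_app2)
  then show ?thesis unfolding Dm_def Mw_deriv[OF assms] by (simp add: act_diff algebra_simps)
qed

lemma Dm_Nil: "reduced F \<Longrightarrow> Dm F [] = (0 :: _ \<Rightarrow>\<^sub>0 'k::field)"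
  by (simp add: Dm_def Mw_def)

lemma Dm_ext:
  assumes rF: "reduced F" and pos: "\<And>y. y \<in> S \<Longrightarrow> Dm F [pos y] = (0 :: _ \<Rightarrow>\<^sub>0 'k::field)"
    and rw: "reduced w" and sw: "fst ` set w \<subseteq> S"
  shows "Dm F w = (0 :: _ \<Rightarrow>\<^sub>0 'k)"
proof -
  have neg: "Dm F [(y, False)] = (0 :: _ \<Rightarrow>\<^sub>0 'k)" if "y \<in> S" for y
  proof -
    have "(0 :: _ \<Rightarrow>\<^sub>0 'k) = Dm F (gmul [(y, False)] [pos y])"
      using Dm_Nil[OF rF, where 'k='k] reduce_pair_cancel(1)[of "(y, False)"] by (simp add: gmul_def linv_def)
    also have "\<dots> = act [] [] [] [pos y] (Dm F [(y, False)])"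
      using Dm_deriv[OF rF, of "[(y, False)]" "[pos y]", where 'k='k] pos[OF that] by simp
    finally have "act [] [] [] [(y, False)] (act [] [] [] [pos y] (Dm F [(y, False)])) = (0 :: _ \<Rightarrow>\<^sub>0 'k)"
      by simp
    moreover have "act [] [] [] [(y, False)] (act [] [] [] [pos y] (Dm F [(y, False)])) = (Dm F [(y, False)] :: _ \<Rightarrow>\<^sub>0 'k)"
      unfolding act_act
      by (rule act_id') (simp_all add: Dm_def rk2_Mw rF reduce_pair_cancel(1)[of "pos y", simplified linv_def, simplified])
    ultimately show ?thesis by simp
  qed
  show ?thesis
    using rw sw
  proof (induct w)
    case Nil then show ?case using Dm_Nil[OF rF] by simp
  next
    case (Cons l w)
    have rw': "reduced w" using Cons.prems by (blast intro: reduced_Cons_D)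
    obtain y t where l: "l = (y, t)" by (cases l)
    have yS: "y \<in> S" using Cons.prems l by auto
    have letter: "Dm F [l] = (0 :: _ \<Rightarrow>\<^sub>0 'k)"
      using pos[OF yS] neg[OF yS] l by (cases t) auto
    have "(Dm F (l # w) :: _ \<Rightarrow>\<^sub>0 'k) = Dm F (gmul [l] w)"
      using Cons.prems by (simp add: gmul_Cons_red)
    also have "\<dots> = act [] [] [] w (Dm F [l]) + act [l] [] [] [] (Dm F w)"
      by (rule Dm_deriv[OF rF]) (simp_all add: rw')
    finally show ?case using letter Cons.hyps[OF rw'] Cons.prems by simp
  qed
qed

lemma islin_mm [intro]: "islin (\<lambda>a. mm_rhs PP a)"
  unfolding mm_rhs_def
  by (intro islin_fsmult islin_fadd islin_fdiff islin_tens1 islin_tens2 islin_comp[OF islin_tens2]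
      islin_comp[OF islin_tens1] islin_amul1 islin_amul2)

theorem mm_Phi:
  assumes "a \<in> algA g r"
  shows "Bk (Phi g r) a = (mm_rhs (Phi g r) a :: _ \<Rightarrow>\<^sub>0 'k::field)"
proof -
  let ?F = "phi_word g r"
  have rF: "reduced ?F" by (simp add: phi_word_eq)
  have Dl: "Dm ?F [pos y] = (0 :: _ \<Rightarrow>\<^sub>0 'k)" if "y \<in> gens g r" for y
    unfolding Dm_def mm_letter[OF that] Mx_eq by (simp add: phi_word_eq)
  have w: "Bk (Phi g r) (gel u) = (mm_rhs (Phi g r) (gel u) :: _ \<Rightarrow>\<^sub>0 'k)" if "u \<in> Poly_Mapping.keys a" for u
  proof -
    have "reduced u" "fst ` set u \<subseteq> gens g r" using assms that by (auto simp: algA_def)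
    then have "Dm ?F u = (0 :: _ \<Rightarrow>\<^sub>0 'k)" using Dm_ext[OF rF Dl] by blast
    then show ?thesis by (simp add: Phi_def mm_rhs_gel Dm_def)
  qed
  have "Bk (Phi g r) a = lin (\<lambda>u. Bk (Phi g r) (gel u)) a"
    by (rule lin_expand) (rule islin_Bk2)
  also have "\<dots> = lin (\<lambda>u. mm_rhs (Phi g r) (gel u)) a"
    by (rule lin_cong) (rule w)
  also have "\<dots> = mm_rhs (Phi g r) a"
    by (rule lin_expand[symmetric]) (rule islin_mm)
  finally show ?thesis .
qed

lemma set_push: "set (push l s) \<subseteq> insert l (set s)"
  by (cases s) auto

lemma set_foldl_push: "set (foldl (\<lambda>s l. push l s) s w) \<subseteq> set s \<union> set w"
proof (induct w arbitrary: s)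
  case Nil then show ?case by simp
next
  case (Cons a w)
  show ?case using Cons[of "push a s"] set_push[of a s] by auto
qed

lemma set_reduce: "set (reduce w) \<subseteq> set w"
  using set_foldl_push[of "[]" w] by (simp add: reduce_def)

lemma gel_algA: "reduced w \<Longrightarrow> fst ` set w \<subseteq> gens g r \<Longrightarrow> (gel w :: _ \<Rightarrow>\<^sub>0 'k::field) \<in> algA g r"
  by (simp add: algA_def gel_def)

lemma phi_gens: "fst ` set (phi_word g r) \<subseteq> gens g r"
proof -
  have "fst ` set (phi_list g r) \<subseteq> gens g r"
    by (auto simp: phi_list_def gens_def cm_def)
  then show ?thesis using set_reduce[of "phi_list g r"] by (auto simp: phi_word_eq)
qed

lemma winv_gens: "fst ` set (winv w) = fst ` set w"
  by (force simp: winv_def linv_def image_iff)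

lemma Bk_gen: "Bk (gel [pos x]) (gel [pos y]) = P x y"
  by (simp only: Bk_gel Bw_single Bl_pos)

lemma alpha_gel: "alpha i = gel [pos (Al i)]" and beta_gel: "beta i = gel [pos (Be i)]"
  and gamma_gel: "gamma k = gel [pos (Ga k)]"
  by (simp_all add: alpha_def beta_def gamma_def)

lemma self_val_gel: "self_val (gel [pos x]) = (smult (1/2) (Poly_Mapping.single ([pos x, pos x], []) 1 - Poly_Mapping.single ([], [pos x, pos x]) 1) :: _ \<Rightarrow>\<^sub>0 'k::field)"
  by (simp add: self_val_def aone_gel gmul_pos)

lemma cross_val_gel: "cross_val (gel [pos x]) (gel [pos y]) = (smult (1/2) (Qf x y (-1)) :: _ \<Rightarrow>\<^sub>0 'k::field)"
  by (simp add: cross_val_def aone_gel gmul_pos single_neg algebra_simps)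

lemma cross_lt: "blt x y \<Longrightarrow> Bk (gel [pos x]) (gel [pos y]) = (cross_val (gel [pos x]) (gel [pos y]) :: _ \<Rightarrow>\<^sub>0 'k::field)"
  unfolding Bk_gen cross_val_gel by (rule P_lt)

theorem theorem3p5:
  fixes g r :: nat
  shows "\<exists>B :: ('k::field_char_0) dbracket.
    double_bracket_on (algA g r) B \<and>
    (\<forall>i. 1 \<le> i \<and> i \<le> g \<longrightarrow>
       B (alpha i) (alpha i) = self_val (alpha i) \<and>
       B (beta i) (beta i) = - self_val (beta i) \<and>
       B (alpha i) (beta i) = smult (1/2)
          (tens (amul (beta i) (alpha i)) aone + tens aone (amul (alpha i) (beta i))
           - tens (alpha i) (beta i) + tens (beta i) (alpha i))) \<and>
    (\<forall>i j. 1 \<le> i \<and> i < j \<and> j \<le> g \<longrightarrow>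
       (\<forall>x\<in>{alpha i, beta i}. \<forall>y\<in>{alpha j, beta j}. B x y = cross_val x y)) \<and>
    (\<forall>i k. 1 \<le> i \<and> i \<le> g \<and> 1 \<le> k \<and> k \<le> r \<longrightarrow>
       (\<forall>x\<in>{alpha i, beta i}. B x (gamma k) = cross_val x (gamma k))) \<and>
    (\<forall>k. 1 \<le> k \<and> k \<le> r \<longrightarrow> B (gamma k) (gamma k) = self_val (gamma k)) \<and>
    (\<forall>k l. 1 \<le> k \<and> k < l \<and> l \<le> r \<longrightarrow> B (gamma k) (gamma l) = cross_val (gamma k) (gamma l)) \<and>
    (\<forall>a\<in>{alpha i | i. 1 \<le> i \<and> i \<le> g} \<union> {beta i | i. 1 \<le> i \<and> i \<le> g}
          \<union> {gamma k | k. 1 \<le> k \<and> k \<le> r}.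
       B (Phi g r) a = mm_rhs (Phi g r) a) \<and>
    quasi_poisson_on (algA g r) B \<and>
    mult_moment_map_on (algA g r) B (Phi g r)"
proof (intro exI conjI allI impI ballI)
  show "double_bracket_on (algA g r) (Bk :: 'k dbracket)" by (rule double_bracket_Bk)
next
  show "quasi_poisson_on (algA g r) (Bk :: 'k dbracket)" by (rule quasi_poisson_Bk)
next
  fix i :: nat
  show "Bk (alpha i) (alpha i) = (self_val (alpha i) :: _ \<Rightarrow>\<^sub>0 'k)"
    unfolding alpha_gel Bk_gen self_val_gel by (simp add: P_eq sgn_def)
  show "Bk (beta i) (beta i) = - (self_val (beta i) :: _ \<Rightarrow>\<^sub>0 'k)"
    unfolding beta_gel Bk_gen self_val_gel by (simp add: P_eq sgn_def smult_uminus_left)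
  show "Bk (alpha i) (beta i) = (smult (1/2)
          (tens (amul (beta i) (alpha i)) aone + tens aone (amul (alpha i) (beta i))
           - tens (alpha i) (beta i) + tens (beta i) (alpha i)) :: _ \<Rightarrow>\<^sub>0 'k)"
    unfolding alpha_gel beta_gel Bk_gen by (simp add: P_ab aone_gel gmul_pos)
next
  fix i j :: nat and x y :: "gword \<Rightarrow>\<^sub>0 'k"
  assume ij: "1 \<le> i \<and> i < j \<and> j \<le> g" and x: "x \<in> {alpha i, beta i}" and y: "y \<in> {alpha j, beta j}"
  then show "Bk x y = cross_val x y"
    by (auto simp: alpha_gel beta_gel intro!: cross_lt simp: blt_def)
next
  fix i k :: nat and x :: "gword \<Rightarrow>\<^sub>0 'k"
  assume "1 \<le> i \<and> i \<le> g \<and> 1 \<le> k \<and> k \<le> r" and x: "x \<in> {alpha i, beta i}"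
  then show "Bk x (gamma k) = cross_val x (gamma k)"
    by (auto simp: alpha_gel beta_gel gamma_gel intro!: cross_lt simp: blt_def)
next
  fix k :: nat
  show "Bk (gamma k) (gamma k) = (self_val (gamma k) :: _ \<Rightarrow>\<^sub>0 'k)"
    unfolding gamma_gel Bk_gen self_val_gel by (simp add: P_eq sgn_def)
next
  fix k l :: nat
  assume "1 \<le> k \<and> k < l \<and> l \<le> r"
  then show "Bk (gamma k) (gamma l) = (cross_val (gamma k) (gamma l) :: _ \<Rightarrow>\<^sub>0 'k)"
    unfolding gamma_gel by (intro cross_lt) (simp add: blt_def)
next
  fix a :: "gword \<Rightarrow>\<^sub>0 'k"
  assume "a \<in> {alpha i | i. 1 \<le> i \<and> i \<le> g} \<union> {beta i | i. 1 \<le> i \<and> i \<le> g}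
          \<union> {gamma k | k. 1 \<le> k \<and> k \<le> r}"
  then have "a \<in> algA g r"
    by (auto simp: alpha_gel beta_gel gamma_gel gens_def intro!: gel_algA)
  then show "Bk (Phi g r) a = mm_rhs (Phi g r) a" by (rule mm_Phi)
next
  show "mult_moment_map_on (algA g r) (Bk :: 'k dbracket) (Phi g r)"
    unfolding mult_moment_map_on_def
  proof (intro conjI ballI)
    have rF: "reduced (phi_word g r)" by (simp add: phi_word_eq)
    show "(Phi g r :: _ \<Rightarrow>\<^sub>0 'k) \<in> algA g r"
      unfolding Phi_def by (rule gel_algA[OF rF phi_gens])
    show "\<exists>Q\<in>algA g r. amul (Phi g r) Q = (aone :: _ \<Rightarrow>\<^sub>0 'k) \<and> amul Q (Phi g r) = aone"
    proof (intro bexI conjI)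
      show "gel (winv (phi_word g r)) \<in> (algA g r :: (_ \<Rightarrow>\<^sub>0 'k) set)"
        by (rule gel_algA) (simp_all add: reduced_winv rF winv_gens phi_gens)
      show "amul (Phi g r) (gel (winv (phi_word g r))) = (aone :: _ \<Rightarrow>\<^sub>0 'k)"
        by (simp add: Phi_def aone_gel gmul_winv)
      show "amul (gel (winv (phi_word g r))) (Phi g r) = (aone :: _ \<Rightarrow>\<^sub>0 'k)"
        by (simp add: Phi_def aone_gel gmul_winv')
    qed
  next
    fix a :: "gword \<Rightarrow>\<^sub>0 'k"
    assume "a \<in> algA g r"
    then show "Bk (Phi g r) a = mm_rhs (Phi g r) a" by (rule mm_Phi)
  qed
qed

end
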